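(* Let $k\in[0,1]$ and $n_k=\lfloor k\Lambda(\tau)\rfloor$. Under batch processing, the inspector selects at time $\tau$ the $n_k$ transactions with the largest scores among all $N(\tau)$ arrivals. Let $N_0(\tau)$, $N_1(\tau)$ be the numbers of non-fraudulent and fraudulent arrivals, let $S^{(0)}_{(1)}\le\dots\le S^{(0)}_{(N_0(\tau))}$ and $S^{(1)}_{(1)}\le\dots\le S^{(1)}_{(N_1(\tau))}$ be the order statistics of their scores, and set $\rho_0(j)=N_0(\tau)-n_k+j$, $\rho_1(j)=N_1(\tau)-j+1$. For $j=1,\dots,\min\{n_k,N_1(\tau)\}$ define $$F_{W_j}(w)=\int_0^1\int_0^{w+s_1} f_{S^{(0)}_{(\rho_0(j))}}(s_0)\,f_{S^{(1)}_{(\rho_1(j))}}(s_1)\,ds_0\,ds_1,$$ the CDF of $W_j=S^{(0)}_{(\rho_0(j))}-S^{(1)}_{(\rho_1(j))}$, where the order-statistic densities are, for an i.i.d. sample of size $n$ with CDF $F$ and density $f$, $f_{(i)}(x)=i\binom{n}{i}F(x)^{i-1}(1-F(x))^{n-i}f(x)$ (with $(F,f,n)=(F_0,f_0,N_0(\tau))$ for $S^{(0)}$ and $(F_1,f_1,N_1(\tau))$ for $S^{(1)}$). Then the fraud detection rate $\Psi_{BP}(k)$ of batch processing satisfies $$\Psi_{BP}(k)\ \ge\ \frac{1}{\beta\Lambda(\tau)}\,\mathbb{E}_{N_0,N_1}\Big[\sum_{j=1}^{\min\{n_k,N_1(\tau)\}}F_{W_j}(0)\Big].$$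
   Context: Setting: transactions arrive on $[0,\tau]$ according to an NHPP $N(t)$ with continuous intensity $\lambda(t)$, $\Lambda(t)=\int_0^t\lambda(u)du$. Each transaction has label $Y\in\{0,1\}$ with $P(Y=1)=\beta\ll1/2$ and classifier score $S\in[0,1]$; transactions are independent, and scores/labels are independent of arrival times. By thinning, fraudulent and non-fraudulent arrivals form independent NHPPs $N_1(t)$, $N_0(t)$ with intensities $\beta\lambda(t)$, $(1-\beta)\lambda(t)$. $F_0,f_0$ (resp. $F_1,f_1$) are the CDF and density of the score of a non-fraudulent (resp. fraudulent) transaction. With capacity $k$, at most $n_k=\lfloor k\Lambda(\tau)\rfloor$ transactions are inspected. The fraud detection rate $\Psi(k)$ is the expected fraction of all fraudulent transactions arriving in $[0,\tau]$ that are inspected, $\Psi(k)=\mathbb{E}\big[\sum_{i\in\mathcal{I}(k)}Y_i/\sum_{i=1}^{N(\tau)}Y_i\big]$ (ratio taken as $1$ if no fraud arrives). *)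

theory Defs
  imports "HOL-Probability.Probability"
begin

text \<open>Rank (1 = highest) of fraudulent transaction i in the batch consisting of
  a non-fraudulent scores s0 0..a-1 and b fraudulent scores s1 0..b-1.
  Items are totally ordered by score; ties (a null event) are broken in favour of
  non-fraudulent items, and among fraudulent items by index.\<close>
definition fraud_rank :: "nat \<Rightarrow> nat \<Rightarrow> (nat \<Rightarrow> real) \<Rightarrow> (nat \<Rightarrow> real) \<Rightarrow> nat \<Rightarrow> nat" where
  "fraud_rank a b s0 s1 i =
     1 + card {j \<in> {..<a}. s1 i \<le> s0 j}
       + card {l \<in> {..<b}. s1 i < s1 l \<or> (s1 l = s1 i \<and> l < i)}"

definition bp_detected :: "nat \<Rightarrow> nat \<Rightarrow> nat \<Rightarrow> (nat \<Rightarrow> real) \<Rightarrow> (nat \<Rightarrow> real) \<Rightarrow> nat" where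
  "bp_detected n a b s0 s1 = card {i \<in> {..<b}. fraud_rank a b s0 s1 i \<le> n}"

definition bp_ratio :: "nat \<Rightarrow> nat \<Rightarrow> nat \<Rightarrow> (nat \<Rightarrow> real) \<Rightarrow> (nat \<Rightarrow> real) \<Rightarrow> real" where
  "bp_ratio n a b s0 s1 = (if b = 0 then 1 else real (bp_detected n a b s0 s1) / real b)"

text \<open>Law of the score vectors given N0(tau) = a, N1(tau) = b: independent i.i.d. scores
  with densities f0 (non-fraudulent) and f1 (fraudulent).\<close>
definition score_space :: "(real \<Rightarrow> real) \<Rightarrow> (real \<Rightarrow> real) \<Rightarrow> nat \<Rightarrow> nat \<Rightarrow> ((nat \<Rightarrow> real) \<times> (nat \<Rightarrow> real)) measure" where
  "score_space f0 f1 a b =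
     (PiM {..<a} (\<lambda>_. density lborel (\<lambda>x. ennreal (f0 x)))) \<Otimes>\<^sub>M
     (PiM {..<b} (\<lambda>_. density lborel (\<lambda>x. ennreal (f1 x))))"

definition Psi_BP :: "(real \<Rightarrow> real) \<Rightarrow> (real \<Rightarrow> real) \<Rightarrow> real \<Rightarrow> real \<Rightarrow> nat \<Rightarrow> real" where
  "Psi_BP f0 f1 \<beta> Lam n =
     measure_pmf.expectation (pair_pmf (poisson_pmf ((1 - \<beta>) * Lam)) (poisson_pmf (\<beta> * Lam)))
       (\<lambda>(a, b). integral\<^sup>L (score_space f0 f1 a b) (\<lambda>(s0, s1). bp_ratio n a b s0 s1))"

text \<open>The index is an integer;
  for i \<le> 0 the binomial coefficient (m choose i) is 0, so the density is 0.\<close>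
definition os_density :: "(real \<Rightarrow> real) \<Rightarrow> (real \<Rightarrow> real) \<Rightarrow> nat \<Rightarrow> int \<Rightarrow> real \<Rightarrow> real" where
  "os_density F f m i x =
     (if 1 \<le> i then real_of_int i * real (m choose nat i) * F x ^ (nat i - 1)
                    * (1 - F x) ^ (m - nat i) * f x
      else 0)"

definition F_W :: "(real \<Rightarrow> real) \<Rightarrow> (real \<Rightarrow> real) \<Rightarrow> (real \<Rightarrow> real) \<Rightarrow> (real \<Rightarrow> real)
                   \<Rightarrow> nat \<Rightarrow> nat \<Rightarrow> nat \<Rightarrow> nat \<Rightarrow> real \<Rightarrow> real" where
  "F_W F0 f0 F1 f1 n a b j w =
     (let rho0 = int a - int n + int j; rho1 = int b - int j + 1 in
      set_lebesgue_integral lborel {0..1} (\<lambda>s1.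
        set_lebesgue_integral lborel {0..w + s1} (\<lambda>s0.
          os_density F0 f0 a rho0 s0 * os_density F1 f1 b rho1 s1)))"

end

theory Submission
  imports Defs
begin


locale dens =
  fixes f F :: "real \<Rightarrow> real"
  assumes f_meas: "f \<in> borel_measurable borel"
    and f_nonneg: "\<And>x. 0 \<le> f x"
    and f_supp: "\<And>x. x \<notin> {0..1} \<Longrightarrow> f x = 0"
    and f_int: "integrable lborel f"
    and f_one: "integral\<^sup>L lborel f = 1"
    and F_def: "\<And>x. F x = set_lebesgue_integral lborel {..x} f"
begin

definition "M = density lborel (\<lambda>x. ennreal (f x))"

lemma f_meas'[measurable]: "f \<in> borel_measurable lborel"
  using f_meas by simp

lemma sets_M[simp, measurable_cong]: "sets M = sets borel"
  by (simp add: M_def)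

lemma space_M[simp]: "space M = UNIV"
  by (simp add: M_def)

lemma emeasure_M: "A \<in> sets borel \<Longrightarrow> emeasure M A = ennreal (LINT x|lborel. indicator A x * f x)"
proof -
  assume A: "A \<in> sets borel"
  have "emeasure M A = (\<integral>\<^sup>+x. ennreal (f x) * indicator A x \<partial>lborel)"
    unfolding M_def using A by (simp add: emeasure_density)
  also have "\<dots> = (\<integral>\<^sup>+x. ennreal (indicator A x * f x) \<partial>lborel)"
    by (intro nn_integral_cong) (auto simp: indicator_def)
  also have "\<dots> = ennreal (LINT x|lborel. indicator A x * f x)"
    using A f_int f_nonneg
    by (intro nn_integral_eq_integral)
       (auto intro!: integrable_real_mult_indicator simp: mult.commute)
  finally show ?thesis .
qed

lemma measure_M: "A \<in> sets borel \<Longrightarrow> measure M A = (LINT x|lborel. indicator A x * f x)"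
  using emeasure_M[of A] f_nonneg
  by (simp add: measure_def integral_nonneg_AE)

lemma prob_M: "prob_space M"
proof
  have "emeasure M UNIV = ennreal (LINT x|lborel. f x)"
    using emeasure_M[of UNIV] by simp
  then show "emeasure M (space M) = 1" using f_one by simp
qed

sublocale P: prob_space M by (rule prob_M)

lemma real_dist_M: "real_distribution M"
  by unfold_locales simp

lemma F_cdf: "F x = cdf M x"
  by (simp add: cdf_def measure_M F_def set_lebesgue_integral_def)

lemma measure_point: "measure M {x} = 0"
proof -
  have "emeasure M {x} = (\<integral>\<^sup>+t. ennreal (f t) * indicator {x} t \<partial>lborel)"
    unfolding M_def by (simp add: emeasure_density)
  also have "\<dots> = 0"
    by (rule nn_integral_null_set) (simp add: finite_imp_null_set_lborel)
  finally have "emeasure M {x} = 0" by simp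
  then show ?thesis by (simp add: measure_def)
qed

lemma F_cont: "isCont F x"
proof -
  interpret real_distribution M by (rule real_dist_M)
  have "F = cdf M" using F_cdf by auto
  then show ?thesis using isCont_cdf measure_point by simp
qed

lemma F_cont_on: "continuous_on S F"
  using F_cont by (simp add: continuous_at_imp_continuous_on)

lemma F_mono: "x \<le> y \<Longrightarrow> F x \<le> F y"
proof -
  interpret real_distribution M by (rule real_dist_M)
  show "x \<le> y \<Longrightarrow> F x \<le> F y" using cdf_nondecreasing F_cdf by simp
qed

lemma F_nonneg: "0 \<le> F x"
proof -
  interpret real_distribution M by (rule real_dist_M)
  show ?thesis using cdf_nonneg F_cdf by simp
qed

lemma F_le1: "F x \<le> 1"
proof -
  interpret real_distribution M by (rule real_dist_M)
  show ?thesis using cdf_bounded_prob F_cdf by simp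
qed

lemma F_meas[measurable]: "F \<in> borel_measurable borel"
  by (intro borel_measurable_continuous_onI F_cont_on)

lemma F_zero: "x < 0 \<Longrightarrow> F x = 0"
proof -
  assume x: "x < 0"
  have "F x = (LINT t|lborel. indicator {..x} t * f t)"
    by (simp add: F_def set_lebesgue_integral_def)
  also have "(\<lambda>t. indicator {..x} t * f t) = (\<lambda>t. 0::real)"
    using x f_supp by (auto simp: indicator_def)
  finally show ?thesis by simp
qed

lemma F_one: "1 \<le> x \<Longrightarrow> F x = 1"
proof -
  assume x: "1 \<le> x"
  have "F x = (LINT t|lborel. indicator {..x} t * f t)"
    by (simp add: F_def set_lebesgue_integral_def)
  also have "(\<lambda>t. indicator {..x} t * f t) = f"
  proof
    fix t show "indicator {..x} t * f t = f t"
      using x f_supp[of t] by (cases "t \<le> x") (auto simp: indicator_def)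
  qed
  finally show ?thesis using f_one by simp
qed

lemma measure_atMost: "measure M {..x} = F x"
  using F_cdf by (simp add: cdf_def)

lemma measure_greaterThan: "measure M {x<..} = 1 - F x"
proof -
  have "{x<..} = space M - {..x}" by auto
  then have "measure M {x<..} = 1 - measure M {..x}"
    using P.prob_compl[of "{..x}"] by simp
  then show ?thesis using measure_atMost by simp
qed

lemma measure_atLeast: "measure M {x..} = 1 - F x"
proof -
  have "{x..} = {x<..} \<union> {x}" by auto
  then have "measure M {x..} = measure M {x<..} + measure M {x}"
    using P.finite_measure_Union[of "{x<..}" "{x}"] by simp
  then show ?thesis using measure_greaterThan measure_point by simp
qed

lemma measure_lessThan: "measure M {..<x} = F x"
proof -
  have "{..x} = {..<x} \<union> {x}" by auto
  then have "measure M {..x} = measure M {..<x} + measure M {x}"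
    using P.finite_measure_Union[of "{..<x}" "{x}"] by simp
  then show ?thesis using measure_atMost measure_point by simp
qed

lemma level_set:
  assumes y: "0 \<le> y" "y < F s"
  shows "\<exists>c. {t. F t \<le> y} \<inter> {..s} = {..c} \<and> F c = y"
proof -
  have s0: "0 \<le> s" using y F_zero[of s] by (cases "s < 0") auto
  let ?C = "{t\<in>{-1..s}. F t = y}"
  have "\<exists>x\<ge>-1. x \<le> s \<and> F x = y"
    using y s0 F_zero[of "-1"] by (intro IVT') (auto intro: F_cont_on)
  then have ne: "?C \<noteq> {}" by auto
  have cl: "closed ?C"
  proof -
    have "?C = {-1..s} \<inter> F -` {y}" by auto
    moreover have "closed ({-1..s} \<inter> F -` {y})"
      by (intro continuous_closed_preimage F_cont_on) auto
    ultimately show ?thesis by simp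
  qed
  have "compact ?C" using cl unfolding compact_eq_bounded_closed by (auto intro: bounded_subset[of "{-1..s}"])
  then obtain c where c: "c \<in> ?C" "\<And>t. t \<in> ?C \<Longrightarrow> t \<le> c"
    using compact_attains_sup[OF _ ne] by blast
  have "{t. F t \<le> y} \<inter> {..s} = {..c}"
  proof (intro equalityI subsetI)
    fix t assume t: "t \<in> {..c}"
    then have "F t \<le> F c" using F_mono by auto
    then show "t \<in> {t. F t \<le> y} \<inter> {..s}" using c t by auto
  next
    fix t assume t: "t \<in> {t. F t \<le> y} \<inter> {..s}"
    show "t \<in> {..c}"
    proof (rule ccontr)
      assume "t \<notin> {..c}"
      then have tc: "c < t" by auto
      then have "F c \<le> F t" using F_mono by auto
      then have "F t = y" using t c by auto
      then have "t \<in> ?C" using t c tc by auto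
      then show False using c(2)[of t] tc by auto
    qed
  qed
  then show ?thesis using c by auto
qed

lemma finite_N: "finite_measure (density M (indicator {..s}))"
proof (rule finite_measureI)
  have "emeasure (density M (indicator {..s})) (space (density M (indicator {..s})))
        = emeasure M ({..s} \<inter> UNIV)"
    by (simp add: emeasure_restricted)
  also have "\<dots> \<noteq> \<infinity>" by (simp add: P.emeasure_eq_measure)
  finally show "emeasure (density M (indicator {..s})) (space (density M (indicator {..s}))) \<noteq> \<infinity>" .
qed

lemma pushforward:
  "distr (density M (indicator {..s})) borel F = density lborel (indicator {0..F s})"
  (is "distr ?N borel F = ?U")
proof (rule cdf_unique')
  interpret N: finite_measure ?N by (rule finite_N)
  show "finite_borel_measure (distr ?N borel F)"
    by (auto simp: finite_borel_measure_def finite_borel_measure_axioms_def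
         intro!: N.finite_measure_distr)
  have "emeasure ?U UNIV = emeasure lborel ({0..F s} \<inter> UNIV)"
    by (intro emeasure_restricted) auto
  then have "emeasure ?U UNIV \<noteq> \<infinity>" using F_nonneg[of s] by (simp add: emeasure_lborel_Icc_eq)
  then show "finite_borel_measure ?U"
    by (auto simp: finite_borel_measure_def finite_borel_measure_axioms_def intro!: finite_measureI)
  show "cdf (distr ?N borel F) = cdf ?U"
  proof
    fix y
    have mF: "F -` {..y} \<in> sets M" using measurable_sets[OF F_meas, of "{..y}"] by simp
    have "cdf (distr ?N borel F) y = measure ?N (F -` {..y})"
      by (simp add: cdf_def measure_distr)
    also have "\<dots> = measure M ({..s} \<inter> F -` {..y})"
      using mF by (simp add: measure_def emeasure_restricted)
    finally have L: "cdf (distr ?N borel F) y = measure M ({..s} \<inter> F -` {..y})" .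
    have R: "cdf ?U y = measure lborel ({0..F s} \<inter> {..y})"
      by (simp add: cdf_def measure_def emeasure_restricted)
    show "cdf (distr ?N borel F) y = cdf ?U y"
    proof (cases "y < 0")
      case True
      then have "{..s} \<inter> F -` {..y} = {}" proof (auto)
        fix t assume "F t \<le> y" then show False using F_nonneg[of t] True by simp
      qed
      moreover have "{0..F s} \<inter> {..y} = {}" using True by auto
      ultimately show ?thesis using L R by simp
    next
      case y0: False
      show ?thesis
      proof (cases "F s \<le> y")
        case True
        then have "{..s} \<inter> F -` {..y} = {..s}" using F_mono by force
        moreover have "{0..F s} \<inter> {..y} = {0..F s}" using True by auto
        ultimately show ?thesis using L R F_nonneg[of s] by (simp add: measure_atMost)
      next
        case False
        then obtain c where c: "{t. F t \<le> y} \<inter> {..s} = {..c}" "F c = y"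
          using level_set[of y s] y0 by auto
        have "{..s} \<inter> F -` {..y} = {..c}" using c by auto
        moreover have "{0..F s} \<inter> {..y} = {0..y}" using False by auto
        ultimately show ?thesis using L R y0 c by (simp add: measure_atMost)
      qed
    qed
  qed
qed

lemma pushforward_nn:
  fixes g :: "real \<Rightarrow> real"
  assumes g[measurable]: "g \<in> borel_measurable borel"
  shows "(\<integral>\<^sup>+t. ennreal (g (F t) * f t) * indicator {..s} t \<partial>lborel)
       = (\<integral>\<^sup>+u. ennreal (g u) * indicator {0..F s} u \<partial>lborel)"
proof -
  have "(\<integral>\<^sup>+u. ennreal (g u) * indicator {0..F s} u \<partial>lborel)
      = (\<integral>\<^sup>+u. ennreal (g u) \<partial>density lborel (indicator {0..F s}))"
    by (simp add: nn_integral_density mult.commute)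
  also have "\<dots> = (\<integral>\<^sup>+u. ennreal (g u) \<partial>distr (density M (indicator {..s})) borel F)"
    by (simp add: pushforward)
  also have "\<dots> = (\<integral>\<^sup>+t. ennreal (g (F t)) \<partial>density M (indicator {..s}))"
    by (subst nn_integral_distr) auto
  also have "\<dots> = (\<integral>\<^sup>+t. indicator {..s} t * ennreal (g (F t)) \<partial>M)"
    by (subst nn_integral_density) auto
  also have "\<dots> = (\<integral>\<^sup>+t. ennreal (f t) * (indicator {..s} t * ennreal (g (F t))) \<partial>lborel)"
    unfolding M_def by (subst nn_integral_density) auto
  also have "\<dots> = (\<integral>\<^sup>+t. ennreal (g (F t) * f t) * indicator {..s} t \<partial>lborel)"
  proof (intro nn_integral_cong)
    fix t
    show "ennreal (f t) * (indicator {..s} t * ennreal (g (F t))) = ennreal (g (F t) * f t) * indicator {..s} t"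
      using f_nonneg[of t]
      by (cases "0 \<le> g (F t)") (auto simp: indicator_def ennreal_mult' ennreal_neg mult.commute)
  qed
  finally show ?thesis ..
qed

end



definition Dt :: "nat \<Rightarrow> nat \<Rightarrow> real \<Rightarrow> real" where
  "Dt m l y = real l * real (m choose l) * y ^ (l - 1) * (1 - y) ^ (m - l)"

definition Bt :: "nat \<Rightarrow> nat \<Rightarrow> real \<Rightarrow> real" where
  "Bt m i y = (\<Sum>l=i..m. real (m choose l) * y ^ l * (1 - y) ^ (m - l))"

lemma choose_comp: "(m - l) * (m choose l) = Suc l * (m choose Suc l)"
  by (subst binomial_absorb_comp, subst binomial_absorption, rule refl)

lemma term_deriv:
  "((\<lambda>y. real (m choose l) * y ^ l * (1 - y) ^ (m - l)) has_real_derivative (Dt m l y - Dt m (Suc l) y)) (at y within S)"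
proof -
  have e: "real (m - l) * real (m choose l) = real (Suc l) * real (m choose Suc l)"
    using choose_comp[of m l] by (metis of_nat_mult)
  have "((\<lambda>y. real (m choose l) * y ^ l * (1 - y) ^ (m - l)) has_real_derivative
        real (m choose l) * (real l * y ^ (l - 1) * (1 - y) ^ (m - l)
          + y ^ l * (real (m - l) * (1 - y) ^ (m - l - 1) * (-1)))) (at y within S)"
    by (auto intro!: derivative_eq_intros simp: algebra_simps)
  moreover have "real (m choose l) * (real l * y ^ (l - 1) * (1 - y) ^ (m - l)
          + y ^ l * (real (m - l) * (1 - y) ^ (m - l - 1) * (-1))) = Dt m l y - Dt m (Suc l) y"
  proof -
    have "real (m choose l) * (y ^ l * (real (m - l) * (1 - y) ^ (m - l - 1)))
        = (real (m - l) * real (m choose l)) * y ^ l * (1 - y) ^ (m - Suc l)"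
      by (simp add: algebra_simps)
    also have "\<dots> = Dt m (Suc l) y" using e by (simp add: Dt_def)
    finally show ?thesis by (simp add: Dt_def algebra_simps)
  qed
  ultimately show ?thesis by simp
qed

lemma Bt_deriv:
  assumes "1 \<le> i"
  shows "(Bt m i has_real_derivative Dt m i y) (at y within S)"
proof (cases "i \<le> Suc m")
  case True
  have "((\<lambda>y. \<Sum>l=i..m. real (m choose l) * y ^ l * (1 - y) ^ (m - l)) has_real_derivative
        (\<Sum>l=i..m. Dt m l y - Dt m (Suc l) y)) (at y within S)"
    by (intro DERIV_sum term_deriv)
  moreover have "(\<Sum>l=i..m. Dt m l y - Dt m (Suc l) y) = Dt m i y - Dt m (Suc m) y"
    using sum_Suc_diff[OF True, of "\<lambda>l. - Dt m l y"] by simp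
  moreover have "Dt m (Suc m) y = 0" by (simp add: Dt_def)
  ultimately show ?thesis unfolding Bt_def[abs_def] by simp
next
  case False
  then have "Bt m i = (\<lambda>_. 0)" by (auto simp: Bt_def[abs_def])
  moreover have "Dt m i y = 0" using False by (simp add: Dt_def)
  ultimately show ?thesis by simp
qed

lemma Bt_0: "1 \<le> i \<Longrightarrow> Bt m i 0 = 0"
  by (simp add: Bt_def)

lemma Dt_nonneg: "0 \<le> y \<Longrightarrow> y \<le> 1 \<Longrightarrow> 0 \<le> Dt m l y"
  by (simp add: Dt_def)

lemma Dt_cont: "continuous_on S (Dt m l)"
  unfolding Dt_def[abs_def] by (intro continuous_intros)

lemma Bt_integral:
  assumes i: "1 \<le> i" and y: "0 \<le> y" "y \<le> 1"
  shows "(\<integral>\<^sup>+u. ennreal (Dt m i u) * indicator {0..y} u \<partial>lborel) = ennreal (Bt m i y)"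
proof -
  have int: "integral\<^sup>L lborel (\<lambda>x. indicator {0 .. y} x *\<^sub>R Dt m i x) = Bt m i y - Bt m i 0"
    using y by (intro integral_FTC_atLeastAtMost Dt_cont)
       (auto simp: has_real_derivative_iff_has_vector_derivative[symmetric] intro: Bt_deriv i)
  have si: "set_integrable lborel {0..y} (Dt m i)"
    by (intro borel_integrable_atLeastAtMost' Dt_cont)
  have "(\<integral>\<^sup>+u. ennreal (Dt m i u) * indicator {0..y} u \<partial>lborel)
      = (\<integral>\<^sup>+u. ennreal (indicator {0 .. y} u *\<^sub>R Dt m i u) \<partial>lborel)"
    by (intro nn_integral_cong) (auto simp: indicator_def)
  also have "\<dots> = ennreal (integral\<^sup>L lborel (\<lambda>x. indicator {0 .. y} x *\<^sub>R Dt m i x))"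
    using si y by (intro nn_integral_eq_integral)
       (auto simp: set_integrable_def indicator_def intro!: Dt_nonneg)
  finally show ?thesis using int Bt_0[OF i] by simp
qed




lemma card_filter_sum: "finite I \<Longrightarrow> card {i\<in>I. P i} = (\<Sum>i\<in>I. if P i then 1 else 0)"
  by (simp add: sum.If_cases Int_def)

lemma count_meas[measurable]:
  assumes "finite I" "S \<in> sets M" "I \<subseteq> J"
  shows "(\<lambda>\<omega>. card {i\<in>I. \<omega> i \<in> S}) \<in> measurable (PiM J (\<lambda>_. M)) (count_space UNIV)"
proof -
  have "(\<lambda>\<omega>. card {i\<in>I. \<omega> i \<in> S}) = (\<lambda>\<omega>. \<Sum>i\<in>I. if \<omega> i \<in> S then 1 else (0::nat))"
    using assms by (simp add: card_filter_sum)
  also have "\<dots> \<in> measurable (PiM J (\<lambda>_. M)) (count_space UNIV)"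
    using assms apply measurable using assms(3) by auto
  finally show ?thesis .
qed

definition binw :: "nat \<Rightarrow> real \<Rightarrow> nat \<Rightarrow> real" where
  "binw k p c = real (k choose c) * p ^ c * (1 - p) ^ (k - c)"

lemma binw_nonneg: "0 \<le> p \<Longrightarrow> p \<le> 1 \<Longrightarrow> 0 \<le> binw k p c"
  by (simp add: binw_def)

lemma binw_step:
  "(\<Sum>c\<le>k. binw k p c * (p * g (Suc c) + (1 - p) * g c)) = (\<Sum>c\<le>Suc k. binw (Suc k) p c * g c)"
proof -
  define A where "A = (\<Sum>c\<le>k. real (k choose c) * p ^ Suc c * (1 - p) ^ (k - c) * g (Suc c))"
  define B where "B = (\<Sum>c\<le>k. real (k choose Suc c) * p ^ Suc c * (1 - p) ^ (k - c) * g (Suc c))"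
  have L: "(\<Sum>c\<le>k. binw k p c * (p * g (Suc c) + (1 - p) * g c))
      = A + (\<Sum>c\<le>k. real (k choose c) * p ^ c * (1 - p) ^ (Suc k - c) * g c)"
    unfolding A_def sum.distrib[symmetric]
  proof (intro sum.cong refl)
    fix c assume "c \<in> {..k}"
    then have e: "Suc k - c = Suc (k - c)" by auto
    show "binw k p c * (p * g (Suc c) + (1 - p) * g c) =
      real (k choose c) * p ^ Suc c * (1 - p) ^ (k - c) * g (Suc c) +
      real (k choose c) * p ^ c * (1 - p) ^ (Suc k - c) * g c"
      unfolding binw_def e by (simp add: algebra_simps)
  qed
  have "(\<Sum>c\<le>k. real (k choose c) * p ^ c * (1 - p) ^ (Suc k - c) * g c)
      = (\<Sum>c\<le>Suc k. real (k choose c) * p ^ c * (1 - p) ^ (Suc k - c) * g c)"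
    by simp
  also have "\<dots> = (1 - p) ^ Suc k * g 0 + B"
    unfolding B_def by (subst sum.atMost_Suc_shift) simp
  finally have L2: "(\<Sum>c\<le>k. real (k choose c) * p ^ c * (1 - p) ^ (Suc k - c) * g c) = (1 - p) ^ Suc k * g 0 + B" .
  have "(\<Sum>c\<le>Suc k. binw (Suc k) p c * g c)
      = (1 - p) ^ Suc k * g 0 + (\<Sum>c\<le>k. real (Suc k choose Suc c) * p ^ Suc c * (1 - p) ^ (k - c) * g (Suc c))"
    unfolding binw_def by (subst sum.atMost_Suc_shift) simp
  also have "(\<Sum>c\<le>k. real (Suc k choose Suc c) * p ^ Suc c * (1 - p) ^ (k - c) * g (Suc c)) = A + B"
    unfolding A_def B_def sum.distrib[symmetric]
    by (intro sum.cong refl) (simp add: algebra_simps)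
  finally show ?thesis using L L2 by simp
qed

lemma binom_count:
  fixes g :: "nat \<Rightarrow> real"
  assumes M: "prob_space M" and S: "S \<in> sets M" and I: "finite I" and g: "\<And>c. 0 \<le> g c"
  shows "(\<integral>\<^sup>+\<omega>. ennreal (g (card {i\<in>I. \<omega> i \<in> S})) \<partial>PiM I (\<lambda>_. M))
       = ennreal (\<Sum>c\<le>card I. binw (card I) (measure M S) c * g c)"
  using I g
proof (induction I arbitrary: g rule: finite_induct)
  case empty
  interpret prob_space "PiM {} (\<lambda>_. M)" by (intro prob_space_PiM M)
  show ?case by (simp add: binw_def emeasure_space_1)
next
  case (insert x I)
  interpret M: prob_space M by (rule M)
  interpret PP: product_prob_space "\<lambda>_. M" by unfold_locales
  let ?p = "measure M S"
  have p: "0 \<le> ?p" "?p \<le> 1" by auto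
  define h where "h c = ?p * g (Suc c) + (1 - ?p) * g c" for c
  have h: "0 \<le> h c" for c using p insert.prems by (auto simp: h_def)
  have cnt: "card {i\<in>insert x I. (fun_upd \<omega> x y) i \<in> S} = card {i\<in>I. \<omega> i \<in> S} + (if y \<in> S then 1 else 0)"
    for \<omega> y
  proof -
    have "{i\<in>insert x I. (fun_upd \<omega> x y) i \<in> S} = (if y \<in> S then insert x {i\<in>I. \<omega> i \<in> S} else {i\<in>I. \<omega> i \<in> S})"
      using insert.hyps by auto
    then show ?thesis using insert.hyps by auto
  qed
  have inner: "(\<integral>\<^sup>+y. ennreal (g (c + (if y \<in> S then 1 else 0))) \<partial>M) = ennreal (h c)" for c
  proof -
    have "(\<integral>\<^sup>+y. ennreal (g (c + (if y \<in> S then 1 else 0))) \<partial>M)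
        = (\<integral>\<^sup>+y. ennreal (g (Suc c)) * indicator S y + ennreal (g c) * indicator (space M - S) y \<partial>M)"
      by (intro nn_integral_cong) (auto simp: indicator_def)
    also have "\<dots> = ennreal (g (Suc c)) * emeasure M S + ennreal (g c) * emeasure M (space M - S)"
      using S by (simp add: nn_integral_add nn_integral_cmult_indicator)
    also have "\<dots> = ennreal (g (Suc c)) * ennreal ?p + ennreal (g c) * ennreal (1 - ?p)"
      using S by (simp add: M.emeasure_eq_measure M.prob_compl)
    also have "\<dots> = ennreal (h c)"
      using insert.prems[of c] insert.prems[of "Suc c"] p unfolding h_def
      by (simp add: ennreal_mult'[symmetric] ennreal_plus[symmetric] mult.commute del: ennreal_plus)
    finally show ?thesis .
  qed
  have "(\<integral>\<^sup>+\<omega>. ennreal (g (card {i\<in>insert x I. \<omega> i \<in> S})) \<partial>PiM (insert x I) (\<lambda>_. M))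
      = (\<integral>\<^sup>+\<omega>. (\<integral>\<^sup>+y. ennreal (g (card {i\<in>insert x I. (fun_upd \<omega> x y) i \<in> S})) \<partial>M) \<partial>PiM I (\<lambda>_. M))"
    using insert.hyps S
    by (intro PP.product_nn_integral_insert measurable_compose[OF count_meas] measurable_count_space) auto
  also have "\<dots> = (\<integral>\<^sup>+\<omega>. ennreal (h (card {i\<in>I. \<omega> i \<in> S})) \<partial>PiM I (\<lambda>_. M))"
    by (intro nn_integral_cong) (simp only: cnt inner)
  also have "\<dots> = ennreal (\<Sum>c\<le>card I. binw (card I) ?p c * h c)"
    using insert.IH h by simp
  also have "(\<Sum>c\<le>card I. binw (card I) ?p c * h c) = (\<Sum>c\<le>card (insert x I). binw (card (insert x I)) ?p c * g c)"
    using insert.hyps binw_step[of "card I" ?p g] by (simp add: h_def)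
  finally show ?case .
qed




lemma card_filter_meas[measurable]:
  fixes J :: "nat set"
  assumes "\<And>j. j \<in> J \<Longrightarrow> Measurable.pred N (P j)"
  shows "(\<lambda>x. card {j\<in>J. P j x}) \<in> measurable N (count_space UNIV)"
proof (rule measurable_card)
  fix i show "{x\<in>space N. i \<in> {j\<in>J. P j x}} \<in> sets N"
  proof (cases "i \<in> J")
    case True
    then have "{x\<in>space N. i \<in> {j\<in>J. P j x}} = {x\<in>space N. P i x}" by auto
    then show ?thesis using assms[OF True] by (simp add: pred_def)
  next
    case False
    then show ?thesis by simp
  qed
qed

lemma comp_meas1:
  assumes "j \<in> I" "sets A = sets borel"
  shows "(\<lambda>z. fst z j) \<in> borel_measurable (PiM I (\<lambda>_. A) \<Otimes>\<^sub>M N)"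
proof -
  have "(\<lambda>x. x j) \<in> measurable (PiM I (\<lambda>_. A)) A" using assms by (intro measurable_component_singleton)
  then have "(\<lambda>x. x j) \<in> borel_measurable (PiM I (\<lambda>_. A))" using assms measurable_cong_sets by blast
  then show ?thesis by (rule measurable_compose[OF measurable_fst])
qed

lemma comp_meas2:
  assumes "i \<in> K" "sets B = sets borel"
  shows "(\<lambda>z. snd z i) \<in> borel_measurable (N \<Otimes>\<^sub>M PiM K (\<lambda>_. B))"
proof -
  have "(\<lambda>x. x i) \<in> measurable (PiM K (\<lambda>_. B)) B" using assms by (intro measurable_component_singleton)
  then have "(\<lambda>x. x i) \<in> borel_measurable (PiM K (\<lambda>_. B))" using assms measurable_cong_sets by blast
  then show ?thesis by (rule measurable_compose[OF measurable_snd])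
qed

lemma pred_comp_le1:
  fixes A B :: "real measure"
  assumes "j \<in> I" "i \<in> K" "sets A = sets borel" "sets B = sets borel"
  shows "Measurable.pred (PiM I (\<lambda>_. A) \<Otimes>\<^sub>M PiM K (\<lambda>_. B)) (\<lambda>z. fst z j \<in> {snd z i..})"
  unfolding atLeast_iff pred_def
  by (rule borel_measurable_le[OF comp_meas2[OF assms(2,4), where N="PiM I (\<lambda>_. A)"] comp_meas1[OF assms(1,3), where N="PiM K (\<lambda>_. B)"]])

lemma pred_comp_le2:
  fixes B :: "real measure"
  assumes "l \<in> K" "i \<in> K" "sets B = sets borel"
  shows "Measurable.pred (N \<Otimes>\<^sub>M PiM K (\<lambda>_. B)) (\<lambda>z. snd z l \<in> {snd z i..})"
  unfolding atLeast_iff pred_def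
  by (rule borel_measurable_le[OF comp_meas2[OF assms(2,3), where N=N] comp_meas2[OF assms(1,3), where N=N]])

lemma pred_comp_le3:
  fixes B :: "real measure"
  assumes "l \<in> K" "i \<in> K" "sets B = sets borel"
  shows "Measurable.pred (PiM K (\<lambda>_. B)) (\<lambda>x. x l \<in> {x i..})"
proof -
  have *: "(\<lambda>x. x j) \<in> borel_measurable (PiM K (\<lambda>_. B))" if "j \<in> K" for j
  proof -
    have "(\<lambda>x. x j) \<in> measurable (PiM K (\<lambda>_. B)) B" using that by (intro measurable_component_singleton)
    then show ?thesis using assms measurable_cong_sets by blast
  qed
  show ?thesis unfolding atLeast_iff pred_def
    by (rule borel_measurable_le[OF *[OF assms(2)] *[OF assms(1)]])
qed

lemma rank_le:
  "fraud_rank a b s0 s1 i \<le> 1 + card {j\<in>{..<a}. s0 j \<in> {s1 i..}} + card {l\<in>{..<b}-{i}. s1 l \<in> {s1 i..}}"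
proof -
  have "{l \<in> {..<b}. s1 i < s1 l \<or> (s1 l = s1 i \<and> l < i)} \<subseteq> {l\<in>{..<b}-{i}. s1 l \<in> {s1 i..}}"
    by auto
  then have "card {l \<in> {..<b}. s1 i < s1 l \<or> (s1 l = s1 i \<and> l < i)} \<le> card {l\<in>{..<b}-{i}. s1 l \<in> {s1 i..}}"
    by (intro card_mono) auto
  then show ?thesis unfolding fraud_rank_def by simp
qed

definition Acnt :: "nat \<Rightarrow> real \<Rightarrow> (nat \<Rightarrow> real) \<Rightarrow> nat" where
  "Acnt a x s0 = card {j\<in>{..<a}. s0 j \<in> {x..}}"
definition Ccnt :: "nat \<Rightarrow> nat \<Rightarrow> real \<Rightarrow> (nat \<Rightarrow> real) \<Rightarrow> nat" where
  "Ccnt b i x s1 = card {l\<in>{..<b}-{i}. s1 l \<in> {x..}}"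

lemma det_ge:
  "(\<Sum>i<b. if 1 + Acnt a (s1 i) s0 + Ccnt b i (s1 i) s1 \<le> n then 1 else 0) \<le> real (bp_detected n a b s0 s1)"
proof -
  have "(\<Sum>i<b. if 1 + Acnt a (s1 i) s0 + Ccnt b i (s1 i) s1 \<le> n then 1 else (0::real))
      = real (card {i\<in>{..<b}. 1 + Acnt a (s1 i) s0 + Ccnt b i (s1 i) s1 \<le> n})"
    by (simp add: sum.If_cases Int_def)
  also have "\<dots> \<le> real (bp_detected n a b s0 s1)"
    unfolding bp_detected_def
    by (intro of_nat_mono card_mono) (auto simp: Acnt_def Ccnt_def intro: order_trans[OF rank_le])
  finally show ?thesis .
qed

definition Phi :: "nat \<Rightarrow> nat \<Rightarrow> nat \<Rightarrow> real \<Rightarrow> real \<Rightarrow> real" where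
  "Phi n a b u v = (\<Sum>\<beta>\<le>b-1. binw (b-1) (1-v) \<beta> * (\<Sum>\<alpha>\<le>a. binw a (1-u) \<alpha> * (if 1+\<alpha>+\<beta> \<le> n then 1 else 0)))"

locale two = d0: dens f0 F0 + d1: dens f1 F1 for f0 F0 f1 F1
begin

abbreviation "P0 a \<equiv> PiM {..<a} (\<lambda>_. d0.M)"
abbreviation "P1 b \<equiv> PiM {..<b} (\<lambda>_. d1.M)"

lemma score_space_eq: "score_space f0 f1 a b = P0 a \<Otimes>\<^sub>M P1 b"
  by (simp add: score_space_def d0.M_def d1.M_def)

lemma prob_P0: "prob_space (P0 a)" by (intro prob_space_PiM d0.prob_M)
lemma prob_P1: "prob_space (P1 b)" by (intro prob_space_PiM d1.prob_M)

lemma pps: "pair_prob_space (P0 a) (P1 b)"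
  using prob_P0[of a] prob_P1[of b] prob_space_imp_sigma_finite[of "P0 a"] prob_space_imp_sigma_finite[of "P1 b"]
  by (simp add: pair_prob_space_def pair_sigma_finite_def)

lemma Phi_nonneg: "0 \<le> u \<Longrightarrow> u \<le> 1 \<Longrightarrow> 0 \<le> v \<Longrightarrow> v \<le> 1 \<Longrightarrow> 0 \<le> Phi n a b u v"
  unfolding Phi_def by (intro sum_nonneg mult_nonneg_nonneg binw_nonneg) auto

lemma per_fraud:
  assumes i: "i < b"
  shows "(\<integral>\<^sup>+z. ennreal (if 1 + Acnt a (snd z i) (fst z) + Ccnt b i (snd z i) (snd z) \<le> n then 1 else 0) \<partial>(P0 a \<Otimes>\<^sub>M P1 b))
       = (\<integral>\<^sup>+y. ennreal (f1 y * Phi n a b (F0 y) (F1 y)) \<partial>lborel)"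
proof -
  interpret pair_prob_space "P0 a" "P1 b" by (rule pps)
  let ?R = "{..<b} - {i}"
  have Rb: "{..<b} = insert i ?R" using i by auto
  have cR: "card ?R = b - 1" using i by simp
  define h where "h x c = (\<Sum>\<alpha>\<le>a. binw a (1 - F0 x) \<alpha> * (if 1+\<alpha>+c \<le> n then 1 else (0::real)))" for x c
  have h_nn: "0 \<le> h x c" for x c
    unfolding h_def using d0.F_nonneg[of x] d0.F_le1[of x]
    by (intro sum_nonneg mult_nonneg_nonneg binw_nonneg) auto
  have meas1: "(\<lambda>z. ennreal (if 1 + Acnt a (snd z i) (fst z) + Ccnt b i (snd z i) (snd z) \<le> n then 1 else 0))
      \<in> borel_measurable (P0 a \<Otimes>\<^sub>M P1 b)"
  proof (rule measurable_compose_countable[where g="\<lambda>z. Acnt a (snd z i) (fst z)"])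
    show "(\<lambda>z. Acnt a (snd z i) (fst z)) \<in> measurable (P0 a \<Otimes>\<^sub>M P1 b) (count_space UNIV)"
      unfolding Acnt_def using i by (intro card_filter_meas pred_comp_le1) auto
    fix c
    show "(\<lambda>z. ennreal (if 1 + c + Ccnt b i (snd z i) (snd z) \<le> n then 1 else 0)) \<in> borel_measurable (P0 a \<Otimes>\<^sub>M P1 b)"
    proof (rule measurable_compose_countable[where g="\<lambda>z. Ccnt b i (snd z i) (snd z)"])
      show "(\<lambda>z. Ccnt b i (snd z i) (snd z)) \<in> measurable (P0 a \<Otimes>\<^sub>M P1 b) (count_space UNIV)"
        unfolding Ccnt_def using i by (intro card_filter_meas pred_comp_le2) auto
    qed simp
  qed
  have inner: "(\<integral>\<^sup>+s0. ennreal (if 1 + Acnt a x s0 + c \<le> n then 1 else 0) \<partial>P0 a) = ennreal (h x c)" for x c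
  proof -
    have "(\<integral>\<^sup>+s0. ennreal (if 1 + Acnt a x s0 + c \<le> n then 1 else 0) \<partial>P0 a)
        = ennreal (\<Sum>\<alpha>\<le>card {..<a}. binw (card {..<a}) (measure d0.M {x..}) \<alpha> * (if 1+\<alpha>+c \<le> n then 1 else 0))"
      unfolding Acnt_def
      by (rule binom_count[where g="\<lambda>\<alpha>. if 1+\<alpha>+c \<le> n then 1 else 0"]) (auto intro: d0.prob_M)
    then show ?thesis by (simp add: h_def d0.measure_atLeast)
  qed
  have "(\<integral>\<^sup>+z. ennreal (if 1 + Acnt a (snd z i) (fst z) + Ccnt b i (snd z i) (snd z) \<le> n then 1 else 0) \<partial>(P0 a \<Otimes>\<^sub>M P1 b))
      = (\<integral>\<^sup>+s1. \<integral>\<^sup>+s0. ennreal (if 1 + Acnt a (s1 i) s0 + Ccnt b i (s1 i) s1 \<le> n then 1 else 0) \<partial>P0 a \<partial>P1 b)"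
    using nn_integral_snd[OF meas1] by simp
  also have "\<dots> = (\<integral>\<^sup>+s1. ennreal (h (s1 i) (Ccnt b i (s1 i) s1)) \<partial>P1 b)"
    by (intro nn_integral_cong) (rule inner)
  also have "\<dots> = (\<integral>\<^sup>+s1. ennreal (h (s1 i) (card {l\<in>?R. s1 l \<in> {s1 i..}})) \<partial>PiM (insert i ?R) (\<lambda>_. d1.M))"
    unfolding Ccnt_def by (subst Rb[symmetric]) (rule refl)
  also have "\<dots> = (\<integral>\<^sup>+y. \<integral>\<^sup>+\<omega>. ennreal (h y (card {l\<in>?R. \<omega> l \<in> {y..}})) \<partial>PiM ?R (\<lambda>_. d1.M) \<partial>d1.M)"
  proof -
    interpret PP: product_prob_space "\<lambda>_. d1.M" by unfold_locales
    have m: "(\<lambda>s1. ennreal (h (s1 i) (card {l\<in>?R. s1 l \<in> {s1 i..}}))) \<in> borel_measurable (PiM (insert i ?R) (\<lambda>_. d1.M))"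
    proof (rule measurable_compose_countable[where f="\<lambda>c s1. ennreal (h (s1 i) c)"])
      show "(\<lambda>s1. card {l\<in>?R. s1 l \<in> {s1 i..}}) \<in> measurable (PiM (insert i ?R) (\<lambda>_. d1.M)) (count_space UNIV)"
        by (intro card_filter_meas pred_comp_le3) auto
      fix c show "(\<lambda>s1. ennreal (h (s1 i) c)) \<in> borel_measurable (PiM (insert i ?R) (\<lambda>_. d1.M))"
        unfolding h_def binw_def by measurable
    qed
    have "(\<integral>\<^sup>+s1. ennreal (h (s1 i) (card {l\<in>?R. s1 l \<in> {s1 i..}})) \<partial>PiM (insert i ?R) (\<lambda>_. d1.M))
       = (\<integral>\<^sup>+y. \<integral>\<^sup>+\<omega>. ennreal (h ((fun_upd \<omega> i y) i) (card {l\<in>?R. (fun_upd \<omega> i y) l \<in> {(fun_upd \<omega> i y) i..}})) \<partial>PiM ?R (\<lambda>_. d1.M) \<partial>d1.M)"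
      by (rule PP.product_nn_integral_insert_rev[OF _ _ m]) auto
    also have "\<dots> = (\<integral>\<^sup>+y. \<integral>\<^sup>+\<omega>. ennreal (h y (card {l\<in>?R. \<omega> l \<in> {y..}})) \<partial>PiM ?R (\<lambda>_. d1.M) \<partial>d1.M)"
    proof -
      have e: "{l\<in>?R. (fun_upd \<omega> i y) l \<in> {y..}} = {l\<in>?R. \<omega> l \<in> {y..}}" for \<omega> y by auto
      show ?thesis by (simp only: fun_upd_same e)
    qed
    finally show ?thesis .
  qed
  also have "\<dots> = (\<integral>\<^sup>+y. ennreal (\<Sum>\<beta>\<le>b-1. binw (b-1) (1 - F1 y) \<beta> * h y \<beta>) \<partial>d1.M)"
  proof (intro nn_integral_cong)
    fix y
    have "(\<integral>\<^sup>+\<omega>. ennreal (h y (card {l\<in>?R. \<omega> l \<in> {y..}})) \<partial>PiM ?R (\<lambda>_. d1.M))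
       = ennreal (\<Sum>\<beta>\<le>card ?R. binw (card ?R) (measure d1.M {y..}) \<beta> * h y \<beta>)"
      by (rule binom_count) (auto intro: d1.prob_M h_nn)
    then show "(\<integral>\<^sup>+\<omega>. ennreal (h y (card {l\<in>?R. \<omega> l \<in> {y..}})) \<partial>PiM ?R (\<lambda>_. d1.M))
       = ennreal (\<Sum>\<beta>\<le>b-1. binw (b-1) (1 - F1 y) \<beta> * h y \<beta>)"
      by (simp add: cR d1.measure_atLeast)
  qed
  also have "\<dots> = (\<integral>\<^sup>+y. ennreal (f1 y) * ennreal (Phi n a b (F0 y) (F1 y)) \<partial>lborel)"
    unfolding d1.M_def
    by (subst nn_integral_density) (auto simp: Phi_def h_def binw_def)
  also have "\<dots> = (\<integral>\<^sup>+y. ennreal (f1 y * Phi n a b (F0 y) (F1 y)) \<partial>lborel)"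
    by (intro nn_integral_cong) (simp add: ennreal_mult' d1.f_nonneg)
  finally show ?thesis .
qed

end



lemma Bt_nonneg: "0 \<le> u \<Longrightarrow> u \<le> 1 \<Longrightarrow> 0 \<le> Bt m i u"
  unfolding Bt_def by (intro sum_nonneg) auto

lemma Psi_nonneg: "0 \<le> u \<Longrightarrow> u \<le> 1 \<Longrightarrow> 0 \<le> (\<Sum>\<alpha>\<le>a. binw a (1-u) \<alpha> * (if 1+\<alpha>+\<beta> \<le> n then 1 else (0::real)))"
  by (intro sum_nonneg mult_nonneg_nonneg binw_nonneg) auto

lemma Dt_eq_binw:
  assumes "1 \<le> j" "j \<le> b"
  shows "Dt b (b - j + 1) v = real b * binw (b-1) (1-v) (j-1)"
proof -
  have e1: "b - j + 1 = Suc (b - j)" using assms by simp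
  have e2: "Suc (b - j) * (b choose Suc (b - j)) = b * ((b - 1) choose (b - j))"
    by (rule binomial_absorption)
  have e3: "(b - 1) choose (b - j) = (b - 1) choose (j - 1)"
    using assms binomial_symmetric[of "j-1" "b-1"] by (simp add: diff_diff_eq)
  have e4: "b - 1 - (j - 1) = b - j" "b - Suc (b - j) = j - 1" using assms by auto
  have "real (Suc (b - j)) * real (b choose Suc (b - j)) = real b * real ((b - 1) choose (j - 1))"
    using e2 e3 by (metis of_nat_mult)
  then show ?thesis unfolding Dt_def binw_def e1 e4
    by (simp add: algebra_simps)
qed

lemma Bt_eq_Psi:
  assumes "1 \<le> j" "n \<le> a + j - 1" "j \<le> n"
  shows "Bt a (a + j - n) u = (\<Sum>\<alpha>\<le>a. binw a (1-u) \<alpha> * (if 1+\<alpha>+(j-1) \<le> n then 1 else (0::real)))"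
proof -
  have "(\<Sum>\<alpha>\<le>a. binw a (1-u) \<alpha> * (if 1+\<alpha>+(j-1) \<le> n then 1 else (0::real)))
      = (\<Sum>\<alpha>\<in>{\<alpha>\<in>{..a}. \<alpha> + j \<le> n}. binw a (1-u) \<alpha>)"
    using assms by (simp add: sum.inter_filter[symmetric] if_distrib cong: if_cong)
  also have "\<dots> = (\<Sum>l=a + j - n..a. real (a choose l) * u ^ l * (1 - u) ^ (a - l))"
  proof (rule sum.reindex_bij_witness[where i="\<lambda>l. a - l" and j="\<lambda>\<alpha>. a - \<alpha>"])
    fix \<alpha> assume al: "\<alpha> \<in> {\<alpha>\<in>{..a}. \<alpha> + j \<le> n}"
    then show "a - (a - \<alpha>) = \<alpha>" "a - \<alpha> \<in> {a + j - n..a}" using assms by auto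
    show "real (a choose (a - \<alpha>)) * u ^ (a - \<alpha>) * (1 - u) ^ (a - (a - \<alpha>)) = binw a (1-u) \<alpha>"
      using al binomial_symmetric[of \<alpha> a] by (auto simp: binw_def algebra_simps)
  next
    fix l assume l: "l \<in> {a + j - n..a}"
    then show "a - (a - l) = l" by auto
    show "a - l \<in> {\<alpha>\<in>{..a}. \<alpha> + j \<le> n}" using l assms by auto
  qed
  finally show ?thesis by (simp add: Bt_def)
qed

lemma sum_shift1: "(\<Sum>j=1..N. g (j - 1)) = (\<Sum>\<beta><N. (g \<beta> :: real))" for N :: nat and g :: "nat \<Rightarrow> real"
  by (induction N) (auto simp: atLeastAtMostSuc_conv)

lemma sum_le_Phi:
  assumes u: "0 \<le> u" "u \<le> 1" and v: "0 \<le> v" "v \<le> 1"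
  shows "(\<Sum>j=1..min n b. if 1 \<le> int a - int n + int j
            then Bt a (nat (int a - int n + int j)) u * Dt b (b - j + 1) v else 0) \<le> real b * Phi n a b u v"
proof -
  define Ps where "Ps \<beta> = (\<Sum>\<alpha>\<le>a. binw a (1-u) \<alpha> * (if 1+\<alpha>+\<beta> \<le> n then 1 else (0::real)))" for \<beta>
  have Ps: "0 \<le> Ps \<beta>" for \<beta> unfolding Ps_def using Psi_nonneg u by blast
  have "(\<Sum>j=1..min n b. if 1 \<le> int a - int n + int j
            then Bt a (nat (int a - int n + int j)) u * Dt b (b - j + 1) v else 0)
       \<le> (\<Sum>j=1..min n b. real b * (binw (b-1) (1-v) (j-1) * Ps (j-1)))"
  proof (intro sum_mono)
    fix j assume j: "j \<in> {1..min n b}"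
    show "(if 1 \<le> int a - int n + int j then Bt a (nat (int a - int n + int j)) u * Dt b (b - j + 1) v else 0)
          \<le> real b * (binw (b-1) (1-v) (j-1) * Ps (j-1))"
    proof (cases "1 \<le> int a - int n + int j")
      case True
      then have n: "n \<le> a + j - 1" "nat (int a - int n + int j) = a + j - n" using j by auto
      have "Bt a (nat (int a - int n + int j)) u = Ps (j-1)"
        unfolding n(2) Ps_def using j n by (intro Bt_eq_Psi) auto
      moreover have "Dt b (b - j + 1) v = real b * binw (b-1) (1-v) (j-1)"
        using j by (intro Dt_eq_binw) auto
      ultimately show ?thesis using True by simp
    next
      case False
      then show ?thesis using Ps v by (simp add: binw_nonneg)
    qed
  qed
  also have "\<dots> = real b * (\<Sum>\<beta><min n b. binw (b-1) (1-v) \<beta> * Ps \<beta>)"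
    using sum_shift1[where g="\<lambda>\<beta>. binw (b-1) (1-v) \<beta> * Ps \<beta>" and N="min n b"]
    by (simp add: sum_distrib_left[symmetric])
  also have "\<dots> \<le> real b * (\<Sum>\<beta>\<le>b-1. binw (b-1) (1-v) \<beta> * Ps \<beta>)"
  proof (intro mult_left_mono sum_mono2)
    show "{..<min n b} \<subseteq> {..b-1}" by auto
  qed (use Ps v in \<open>auto intro!: mult_nonneg_nonneg binw_nonneg\<close>)
  also have "\<dots> = real b * Phi n a b u v" by (simp add: Phi_def Ps_def)
  finally show ?thesis .
qed




context dens begin

lemma set_int_Dt:
  assumes i: "1 \<le> i" and s: "0 \<le> s" "s \<le> 1"
  shows "(LINT t:{0..s}|lborel. Dt m i (F t) * f t) = Bt m i (F s)"
proof -
  have Dm: "Dt m i \<in> borel_measurable borel"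
    by (intro borel_measurable_continuous_onI Dt_cont)
  have nn: "0 \<le> Dt m i (F t) * f t" for t
    using F_nonneg F_le1 f_nonneg by (intro mult_nonneg_nonneg Dt_nonneg) auto
  have "(LINT t:{0..s}|lborel. Dt m i (F t) * f t)
      = enn2real (\<integral>\<^sup>+t. ennreal (indicator {0..s} t *\<^sub>R (Dt m i (F t) * f t)) \<partial>lborel)"
    unfolding set_lebesgue_integral_def using nn Dm
    by (intro integral_eq_nn_integral) auto
  also have "(\<integral>\<^sup>+t. ennreal (indicator {0..s} t *\<^sub>R (Dt m i (F t) * f t)) \<partial>lborel)
      = (\<integral>\<^sup>+t. ennreal (Dt m i (F t) * f t) * indicator {..s} t \<partial>lborel)"
  proof (intro nn_integral_cong)
    fix t show "ennreal (indicator {0..s} t *\<^sub>R (Dt m i (F t) * f t)) = ennreal (Dt m i (F t) * f t) * indicator {..s} t"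
      using f_supp[of t] s by (cases "t < 0") (auto simp: indicator_def)
  qed
  also have "\<dots> = (\<integral>\<^sup>+u. ennreal (Dt m i u) * indicator {0..F s} u \<partial>lborel)"
    using Dm by (rule pushforward_nn)
  also have "\<dots> = ennreal (Bt m i (F s))"
    using i F_nonneg F_le1 by (intro Bt_integral) auto
  finally show ?thesis using Bt_nonneg[of "F s"] F_nonneg F_le1 by simp
qed

lemma set01_nn:
  assumes "H \<in> borel_measurable borel" "\<And>y. 0 \<le> H y"
  shows "(LINT y:{0..1}|lborel. H y * f y) = enn2real (\<integral>\<^sup>+y. ennreal (f y * H y) \<partial>lborel)"
proof -
  have "(LINT y:{0..1}|lborel. H y * f y) = enn2real (\<integral>\<^sup>+y. ennreal (indicator {0..1} y *\<^sub>R (H y * f y)) \<partial>lborel)"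
    unfolding set_lebesgue_integral_def using assms f_nonneg
    by (intro integral_eq_nn_integral) auto
  also have "(\<integral>\<^sup>+y. ennreal (indicator {0..1} y *\<^sub>R (H y * f y)) \<partial>lborel) = (\<integral>\<^sup>+y. ennreal (f y * H y) \<partial>lborel)"
  proof (intro nn_integral_cong)
    fix y show "ennreal (indicator {0..1} y *\<^sub>R (H y * f y)) = ennreal (f y * H y)"
      using f_supp[of y] by (cases "y \<in> {0..1}") (auto simp: indicator_def mult.commute)
  qed
  finally show ?thesis .
qed

end

context two begin

definition G :: "nat \<Rightarrow> nat \<Rightarrow> nat \<Rightarrow> nat \<Rightarrow> real \<Rightarrow> real" where
  "G n a b j y = f1 y * (if 1 \<le> int a - int n + int j
      then Bt a (nat (int a - int n + int j)) (F0 y) * Dt b (b - j + 1) (F1 y) else 0)"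

lemma G_nonneg: "0 \<le> G n a b j y"
  unfolding G_def using d0.F_nonneg d0.F_le1 d1.F_nonneg d1.F_le1 d1.f_nonneg
  by (intro mult_nonneg_nonneg) (auto intro!: mult_nonneg_nonneg Bt_nonneg Dt_nonneg)

lemma G_meas[measurable]: "G n a b j \<in> borel_measurable borel"
proof -
  have "Bt a k \<in> borel_measurable borel" for k unfolding Bt_def[abs_def] by measurable
  moreover have "Dt b k \<in> borel_measurable borel" for k unfolding Dt_def[abs_def] by measurable
  ultimately show ?thesis unfolding G_def by measurable
qed

lemma FW_eq:
  assumes j: "1 \<le> j" "j \<le> b"
  shows "F_W F0 f0 F1 f1 n a b j 0 = enn2real (\<integral>\<^sup>+y. ennreal (G n a b j y) \<partial>lborel)"
proof -
  define r0 where "r0 = int a - int n + int j"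
  have os1: "os_density F1 f1 b (int b - int j + 1) s = Dt b (b - j + 1) (F1 s) * f1 s" for s
  proof -
    have "nat (int b - int j + 1) = b - j + 1" "real_of_int (int b - int j + 1) = real (b - j + 1)"
      using j by auto
    then show ?thesis using j unfolding os_density_def Dt_def by simp
  qed
  define H where "H y = (if 1 \<le> r0 then Bt a (nat r0) (F0 y) * Dt b (b - j + 1) (F1 y) else 0)" for y
  have inner: "(LINT s0:{0..0 + s1}|lborel. os_density F0 f0 a r0 s0 * os_density F1 f1 b (int b - int j + 1) s1)
      = H s1 * f1 s1" if s1: "s1 \<in> {0..1}" for s1
  proof (cases "1 \<le> r0")
    case True
    have os0: "os_density F0 f0 a r0 s = Dt a (nat r0) (F0 s) * f0 s" for s
    proof -
      have "real_of_int r0 = real (nat r0)" using True by simp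
      then show ?thesis using True unfolding os_density_def Dt_def by simp
    qed
    have "(LINT s0:{0..0 + s1}|lborel. os_density F0 f0 a r0 s0 * os_density F1 f1 b (int b - int j + 1) s1)
        = (LINT s0:{0..s1}|lborel. Dt a (nat r0) (F0 s0) * f0 s0) * os_density F1 f1 b (int b - int j + 1) s1"
      by (simp add: os0)
    also have "\<dots> = Bt a (nat r0) (F0 s1) * (Dt b (b - j + 1) (F1 s1) * f1 s1)"
      using True s1 by (subst d0.set_int_Dt) (auto simp: os1)
    finally show ?thesis using True by (simp add: H_def)
  next
    case False
    then have "os_density F0 f0 a r0 s = 0" for s by (simp add: os_density_def)
    then show ?thesis using False by (simp add: H_def)
  qed
  have "F_W F0 f0 F1 f1 n a b j 0 = (LINT s1:{0..1}|lborel. H s1 * f1 s1)"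
    unfolding F_W_def Let_def r0_def[symmetric]
    by (rule set_lebesgue_integral_cong) (simp, use inner in blast)
  also have "\<dots> = enn2real (\<integral>\<^sup>+y. ennreal (f1 y * H y) \<partial>lborel)"
  proof (rule d1.set01_nn)
    have "Bt a k \<in> borel_measurable borel" for k unfolding Bt_def[abs_def] by measurable
    moreover have "Dt b k \<in> borel_measurable borel" for k unfolding Dt_def[abs_def] by measurable
    ultimately show "H \<in> borel_measurable borel" unfolding H_def by measurable
    show "0 \<le> H y" for y unfolding H_def using d0.F_nonneg d0.F_le1 d1.F_nonneg d1.F_le1
      by (auto intro!: mult_nonneg_nonneg Bt_nonneg Dt_nonneg)
  qed
  also have "(\<lambda>y. f1 y * H y) = G n a b j" by (auto simp: G_def H_def r0_def)
  finally show ?thesis .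
qed

end



context two begin

lemma rank_meas:
  assumes i: "i < b"
  shows "(\<lambda>z. fraud_rank a b (fst z) (snd z) i) \<in> measurable (P0 a \<Otimes>\<^sub>M P1 b) (count_space UNIV)"
proof -
  have c1: "(\<lambda>z. card {j\<in>{..<a}. snd z i \<le> fst z j}) \<in> measurable (P0 a \<Otimes>\<^sub>M P1 b) (count_space UNIV)"
    using pred_comp_le1[where A=d0.M and B=d1.M and I="{..<a}" and K="{..<b}" and i=i] i
    by (intro card_filter_meas) auto
  have m2: "(\<lambda>z. snd z l) \<in> borel_measurable (P0 a \<Otimes>\<^sub>M P1 b)" if "l < b" for l
    using that by (intro comp_meas2) auto
  have c2: "(\<lambda>z. card {l\<in>{..<b}. snd z i < snd z l \<or> (snd z l = snd z i \<and> l < i)}) \<in> measurable (P0 a \<Otimes>\<^sub>M P1 b) (count_space UNIV)"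
  proof (intro card_filter_meas)
    fix l assume l: "l \<in> {..<b}"
    note [measurable] = m2[OF i] m2[of l]
    show "Measurable.pred (P0 a \<Otimes>\<^sub>M P1 b) (\<lambda>z. snd z i < snd z l \<or> (snd z l = snd z i \<and> l < i))"
      using l by measurable
  qed
  show ?thesis unfolding fraud_rank_def
  proof (rule measurable_compose_countable[where g="\<lambda>z. card {j\<in>{..<a}. snd z i \<le> fst z j}", OF _ c1])
    fix c show "(\<lambda>z. 1 + c + card {l\<in>{..<b}. snd z i < snd z l \<or> (snd z l = snd z i \<and> l < i)}) \<in> measurable (P0 a \<Otimes>\<^sub>M P1 b) (count_space UNIV)"
      by (rule measurable_compose_countable[where g="\<lambda>z. card {l\<in>{..<b}. snd z i < snd z l \<or> (snd z l = snd z i \<and> l < i)}", OF _ c2]) simp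
  qed
qed

lemma det_meas:
  "(\<lambda>z. bp_detected n a b (fst z) (snd z)) \<in> measurable (P0 a \<Otimes>\<^sub>M P1 b) (count_space UNIV)"
  unfolding bp_detected_def
proof (intro card_filter_meas)
  fix i assume "i \<in> {..<b}"
  then have "(\<lambda>z. fraud_rank a b (fst z) (snd z) i) \<in> measurable (P0 a \<Otimes>\<^sub>M P1 b) (count_space UNIV)"
    by (intro rank_meas) auto
  then show "Measurable.pred (P0 a \<Otimes>\<^sub>M P1 b) (\<lambda>z. fraud_rank a b (fst z) (snd z) i \<le> n)"
    by measurable
qed

lemma det_meas_real[measurable]:
  "(\<lambda>z. real (bp_detected n a b (fst z) (snd z))) \<in> borel_measurable (P0 a \<Otimes>\<^sub>M P1 b)"
  by (rule measurable_compose[OF det_meas]) simp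

lemma det_le: "bp_detected n a b s0 s1 \<le> b"
  unfolding bp_detected_def using card_mono[of "{..<b}" "{i \<in> {..<b}. fraud_rank a b s0 s1 i \<le> n}"] by auto

lemma ED_le: "(\<integral>\<^sup>+z. ennreal (real (bp_detected n a b (fst z) (snd z))) \<partial>(P0 a \<Otimes>\<^sub>M P1 b)) \<le> of_nat b"
proof -
  interpret pair_prob_space "P0 a" "P1 b" by (rule pps)
  have "(\<integral>\<^sup>+z. ennreal (real (bp_detected n a b (fst z) (snd z))) \<partial>(P0 a \<Otimes>\<^sub>M P1 b))
      \<le> (\<integral>\<^sup>+z. ennreal (real b) \<partial>(P0 a \<Otimes>\<^sub>M P1 b))"
    by (intro nn_integral_mono) (simp add: det_le)
  also have "\<dots> = of_nat b" by (simp add: P.emeasure_space_1 ennreal_of_nat_eq_real_of_nat)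
  finally show ?thesis .
qed

lemma ED_ge:
  "of_nat b * (\<integral>\<^sup>+y. ennreal (f1 y * Phi n a b (F0 y) (F1 y)) \<partial>lborel)
   \<le> (\<integral>\<^sup>+z. ennreal (real (bp_detected n a b (fst z) (snd z))) \<partial>(P0 a \<Otimes>\<^sub>M P1 b))"
proof -
  let ?ind = "\<lambda>i z. ennreal (if 1 + Acnt a (snd z i) (fst z) + Ccnt b i (snd z i) (snd z) \<le> n then 1 else 0)"
  have meas: "?ind i \<in> borel_measurable (P0 a \<Otimes>\<^sub>M P1 b)" if "i < b" for i
  proof (rule measurable_compose_countable[where g="\<lambda>z. Acnt a (snd z i) (fst z)"])
    show "(\<lambda>z. Acnt a (snd z i) (fst z)) \<in> measurable (P0 a \<Otimes>\<^sub>M P1 b) (count_space UNIV)"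
      unfolding Acnt_def using that by (intro card_filter_meas pred_comp_le1) auto
    fix c
    show "(\<lambda>z. ennreal (if 1 + c + Ccnt b i (snd z i) (snd z) \<le> n then 1 else 0)) \<in> borel_measurable (P0 a \<Otimes>\<^sub>M P1 b)"
    proof (rule measurable_compose_countable[where g="\<lambda>z. Ccnt b i (snd z i) (snd z)"])
      show "(\<lambda>z. Ccnt b i (snd z i) (snd z)) \<in> measurable (P0 a \<Otimes>\<^sub>M P1 b) (count_space UNIV)"
        unfolding Ccnt_def using that by (intro card_filter_meas pred_comp_le2) auto
    qed simp
  qed
  have "(\<Sum>i<b. \<integral>\<^sup>+z. ?ind i z \<partial>(P0 a \<Otimes>\<^sub>M P1 b))
      = (\<Sum>i<b. (\<integral>\<^sup>+y. ennreal (f1 y * Phi n a b (F0 y) (F1 y)) \<partial>lborel))"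
    by (intro sum.cong refl per_fraud) auto
  then have "of_nat b * (\<integral>\<^sup>+y. ennreal (f1 y * Phi n a b (F0 y) (F1 y)) \<partial>lborel)
      = (\<Sum>i<b. \<integral>\<^sup>+z. ?ind i z \<partial>(P0 a \<Otimes>\<^sub>M P1 b))"
    by simp
  also have "\<dots> = (\<integral>\<^sup>+z. (\<Sum>i<b. ?ind i z) \<partial>(P0 a \<Otimes>\<^sub>M P1 b))"
    using meas by (intro nn_integral_sum[symmetric]) auto
  also have "\<dots> \<le> (\<integral>\<^sup>+z. ennreal (real (bp_detected n a b (fst z) (snd z))) \<partial>(P0 a \<Otimes>\<^sub>M P1 b))"
  proof (intro nn_integral_mono)
    fix z
    have "(\<Sum>i<b. ?ind i z) = ennreal (\<Sum>i<b. if 1 + Acnt a (snd z i) (fst z) + Ccnt b i (snd z i) (snd z) \<le> n then 1 else 0)"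
      by (subst sum_ennreal[symmetric]) auto
    also have "\<dots> \<le> ennreal (real (bp_detected n a b (fst z) (snd z)))"
      by (intro ennreal_leI det_ge)
    finally show "(\<Sum>i<b. ?ind i z) \<le> ennreal (real (bp_detected n a b (fst z) (snd z)))" .
  qed
  finally show ?thesis .
qed

lemma step1:
  "(\<Sum>j=1..min n b. F_W F0 f0 F1 f1 n a b j 0)
     \<le> integral\<^sup>L (score_space f0 f1 a b) (\<lambda>(s0, s1). real (bp_detected n a b s0 s1))"
proof -
  let ?ED = "\<integral>\<^sup>+z. ennreal (real (bp_detected n a b (fst z) (snd z))) \<partial>(P0 a \<Otimes>\<^sub>M P1 b)"
  let ?I = "\<integral>\<^sup>+y. ennreal (f1 y * Phi n a b (F0 y) (F1 y)) \<partial>lborel"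
  have EDfin: "?ED < \<top>" using ED_le[where n=n and a=a and b=b] of_nat_less_top by (rule le_less_trans)
  have sumG: "(\<integral>\<^sup>+y. ennreal (\<Sum>j=1..min n b. G n a b j y) \<partial>lborel) \<le> of_nat b * ?I"
  proof -
    have "(\<integral>\<^sup>+y. ennreal (\<Sum>j=1..min n b. G n a b j y) \<partial>lborel)
       \<le> (\<integral>\<^sup>+y. of_nat b * ennreal (f1 y * Phi n a b (F0 y) (F1 y)) \<partial>lborel)"
    proof (intro nn_integral_mono)
      fix y
      have "(\<Sum>j=1..min n b. G n a b j y) = f1 y * (\<Sum>j=1..min n b. if 1 \<le> int a - int n + int j
            then Bt a (nat (int a - int n + int j)) (F0 y) * Dt b (b - j + 1) (F1 y) else 0)"
        unfolding G_def by (simp add: sum_distrib_left)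
      also have "\<dots> \<le> f1 y * (real b * Phi n a b (F0 y) (F1 y))"
        using d0.F_nonneg d0.F_le1 d1.F_nonneg d1.F_le1 d1.f_nonneg
        by (intro mult_left_mono sum_le_Phi) auto
      finally have "(\<Sum>j=1..min n b. G n a b j y) \<le> real b * (f1 y * Phi n a b (F0 y) (F1 y))"
        by (simp add: mult.left_commute)
      then have "ennreal (\<Sum>j=1..min n b. G n a b j y) \<le> ennreal (real b * (f1 y * Phi n a b (F0 y) (F1 y)))"
        by (rule ennreal_leI)
      also have "\<dots> = of_nat b * ennreal (f1 y * Phi n a b (F0 y) (F1 y))"
        by (simp add: ennreal_mult' ennreal_of_nat_eq_real_of_nat)
      finally show "ennreal (\<Sum>j=1..min n b. G n a b j y) \<le> of_nat b * ennreal (f1 y * Phi n a b (F0 y) (F1 y))" .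
    qed
    also have "\<dots> = of_nat b * ?I"
    proof (rule nn_integral_cmult)
      have "Phi n a b u v = (\<Sum>\<beta>\<le>b-1. binw (b-1) (1-v) \<beta> * (\<Sum>\<alpha>\<le>a. binw a (1-u) \<alpha> * (if 1+\<alpha>+\<beta> \<le> n then 1 else 0)))" for u v
        by (simp add: Phi_def)
      show "(\<lambda>y. ennreal (f1 y * Phi n a b (F0 y) (F1 y))) \<in> borel_measurable lborel"
        unfolding Phi_def binw_def by measurable
    qed
    finally show ?thesis .
  qed
  have sumG_le: "(\<integral>\<^sup>+y. ennreal (\<Sum>j=1..min n b. G n a b j y) \<partial>lborel) \<le> ?ED"
    using sumG ED_ge[where n=n and a=a and b=b] by (rule order_trans)
  have Gfin: "(\<integral>\<^sup>+y. ennreal (G n a b j y) \<partial>lborel) < \<top>" if j: "j \<in> {1..min n b}" for j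
  proof -
    have "(\<integral>\<^sup>+y. ennreal (G n a b j y) \<partial>lborel) \<le> (\<integral>\<^sup>+y. ennreal (\<Sum>j=1..min n b. G n a b j y) \<partial>lborel)"
      using j by (intro nn_integral_mono ennreal_leI member_le_sum G_nonneg) auto
    then show ?thesis using sumG_le EDfin by (meson le_less_trans)
  qed
  have "(\<Sum>j=1..min n b. F_W F0 f0 F1 f1 n a b j 0) = (\<Sum>j=1..min n b. enn2real (\<integral>\<^sup>+y. ennreal (G n a b j y) \<partial>lborel))"
    by (intro sum.cong refl FW_eq) auto
  also have "\<dots> = enn2real (\<Sum>j=1..min n b. (\<integral>\<^sup>+y. ennreal (G n a b j y) \<partial>lborel))"
    using Gfin by (subst enn2real_sum) (auto simp: comp_def)
  also have "(\<Sum>j=1..min n b. (\<integral>\<^sup>+y. ennreal (G n a b j y) \<partial>lborel)) = (\<integral>\<^sup>+y. (\<Sum>j=1..min n b. ennreal (G n a b j y)) \<partial>lborel)"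
    by (intro nn_integral_sum[symmetric]) auto
  also have "\<dots> = (\<integral>\<^sup>+y. ennreal (\<Sum>j=1..min n b. G n a b j y) \<partial>lborel)"
    by (intro nn_integral_cong sum_ennreal) (auto intro: G_nonneg)
  also have "enn2real \<dots> \<le> enn2real ?ED"
    using sumG_le EDfin by (intro enn2real_mono) auto
  also have "enn2real ?ED = integral\<^sup>L (score_space f0 f1 a b) (\<lambda>(s0, s1). real (bp_detected n a b s0 s1))"
    unfolding score_space_eq by (subst integral_eq_nn_integral) (auto simp: case_prod_beta)
  finally show ?thesis .
qed

end



definition shift :: "nat \<Rightarrow> nat \<Rightarrow> nat" where
  "shift l i = (if i < l then i else Suc i)"

definition del :: "nat \<Rightarrow> nat \<Rightarrow> (nat \<Rightarrow> real) \<Rightarrow> (nat \<Rightarrow> real)" where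
  "del l b s = (\<lambda>i\<in>{..<b}. s (shift l i))"

lemma shift_less_iff: "shift l x < shift l y \<longleftrightarrow> x < y"
  by (auto simp: shift_def)

lemma shift_inj: "inj (shift l)"
  by (auto simp: inj_def shift_def split: if_splits)

lemma rank_del:
  assumes i': "i' < b" and l: "l \<le> b"
  shows "fraud_rank a b s0 (del l b s1) i' \<le> fraud_rank a (Suc b) s0 s1 (shift l i')"
proof -
  let ?i = "shift l i'"
  have v: "del l b s1 m = s1 (shift l m)" if "m < b" for m using that by (simp add: del_def)
  have A: "{l'\<in>{..<b}. del l b s1 i' < del l b s1 l' \<or> (del l b s1 l' = del l b s1 i' \<and> l' < i')}
        = {m\<in>{..<b}. s1 ?i < s1 (shift l m) \<or> (s1 (shift l m) = s1 ?i \<and> m < i')}"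
    using i' by (auto simp: v)
  have "card {m\<in>{..<b}. s1 ?i < s1 (shift l m) \<or> (s1 (shift l m) = s1 ?i \<and> m < i')}
     \<le> card {m\<in>{..<Suc b}. s1 ?i < s1 m \<or> (s1 m = s1 ?i \<and> m < ?i)}"
  proof (rule card_inj_on_le[where f="shift l"])
    show "inj_on (shift l) {m\<in>{..<b}. s1 ?i < s1 (shift l m) \<or> (s1 (shift l m) = s1 ?i \<and> m < i')}"
      using shift_inj by (auto intro: inj_on_subset)
    show "shift l ` {m\<in>{..<b}. s1 ?i < s1 (shift l m) \<or> (s1 (shift l m) = s1 ?i \<and> m < i')}
        \<subseteq> {m\<in>{..<Suc b}. s1 ?i < s1 m \<or> (s1 m = s1 ?i \<and> m < ?i)}"
      by (auto simp: shift_less_iff) (auto simp: shift_def)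
  qed auto
  moreover have "del l b s1 i' = s1 ?i" using v i' by simp
  ultimately show ?thesis unfolding fraud_rank_def A by simp
qed

lemma det_del:
  assumes l: "l < Suc b"
  shows "real (card ({i\<in>{..<Suc b}. fraud_rank a (Suc b) s0 s1 i \<le> n} - {l})) \<le> real (bp_detected n a b s0 (del l b s1))"
proof -
  let ?X = "{i\<in>{..<Suc b}. fraud_rank a (Suc b) s0 s1 i \<le> n}"
  let ?Y = "{i'\<in>{..<b}. fraud_rank a b s0 (del l b s1) i' \<le> n}"
  have "?X - {l} \<subseteq> shift l ` ?Y"
  proof
    fix i assume i: "i \<in> ?X - {l}"
    define i' where "i' = (if i < l then i else i - 1)"
    have si: "shift l i' = i" using i by (auto simp: shift_def i'_def)
    have i'b: "i' < b" using i l by (auto simp: i'_def)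
    have "fraud_rank a b s0 (del l b s1) i' \<le> n"
      using rank_del[OF i'b, of l a s0 s1] l i si by auto
    then show "i \<in> shift l ` ?Y" using si i'b by force
  qed
  then have "card (?X - {l}) \<le> card (shift l ` ?Y)" by (intro card_mono) auto
  also have "\<dots> \<le> card ?Y" by (rule card_image_le) auto
  finally show ?thesis unfolding bp_detected_def by simp
qed

lemma det_sum:
  "real b * real (bp_detected n a (Suc b) s0 s1) \<le> (\<Sum>l<Suc b. real (bp_detected n a b s0 (del l b s1)))"
proof -
  let ?X = "{i\<in>{..<Suc b}. fraud_rank a (Suc b) s0 s1 i \<le> n}"
  have c: "real (card (?X - {l})) = real (card ?X) - (if l \<in> ?X then 1 else 0)" for l
  proof (cases "l \<in> ?X")
    case True
    have "finite ?X" by simp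
    then have "1 \<le> card ?X" using True by (simp add: Suc_le_eq card_gt_0_iff) blast
    then show ?thesis using True by (simp add: card_Diff_singleton of_nat_diff)
  qed simp
  have "real (card ?X) = (\<Sum>l<Suc b. (if fraud_rank a (Suc b) s0 s1 l \<le> n then 1 else 0::real))"
    by (subst card_filter_sum) (auto simp: of_nat_sum intro!: sum.cong)
  also have "\<dots> = (\<Sum>l<Suc b. (if l \<in> ?X then 1 else 0::real))"
    by (intro sum.cong) auto
  finally have "(\<Sum>l<Suc b. (if l \<in> ?X then 1 else 0::real)) = real (card ?X)" ..
  note S = this
  have "(\<Sum>l<Suc b. real (card (?X - {l}))) = (\<Sum>l<Suc b. real (card ?X) - (if l \<in> ?X then 1 else 0))"
    by (intro sum.cong refl c)
  also have "\<dots> = (\<Sum>l<Suc b. real (card ?X)) - (\<Sum>l<Suc b. (if l \<in> ?X then 1 else 0::real))"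
    by (rule sum_subtractf)
  also have "\<dots> = real b * real (card ?X)"
    unfolding S by (simp add: algebra_simps)
  finally have "(\<Sum>l<Suc b. real (card (?X - {l}))) = real b * real (card ?X)" .
  moreover have "(\<Sum>l<Suc b. real (card (?X - {l}))) \<le> (\<Sum>l<Suc b. real (bp_detected n a b s0 (del l b s1)))"
    by (intro sum_mono det_del) auto
  ultimately show ?thesis unfolding bp_detected_def by simp
qed

context two begin

lemma del_meas: "del l b \<in> measurable (P1 (Suc b)) (P1 b)"
  unfolding del_def
  by (intro measurable_restrict measurable_component_singleton) (auto simp: shift_def)

lemma distr_del:
  assumes l: "l < Suc b"
  shows "distr (P1 (Suc b)) (P1 b) (del l b) = P1 b"
proof -
  have "distr (P1 (Suc b)) (\<Pi>\<^sub>M i\<in>{..<b}. (\<lambda>_. d1.M) (shift l i)) (\<lambda>\<omega>. \<lambda>n\<in>{..<b}. \<omega> (shift l n))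
     = (\<Pi>\<^sub>M i\<in>{..<b}. (\<lambda>_. d1.M) (shift l i))"
  proof (rule distr_PiM_reindex)
    show "inj_on (shift l) {..<b}" using shift_inj inj_on_subset by blast
  qed (auto simp: shift_def d1.prob_M)
  then show ?thesis by (simp add: del_def[abs_def])
qed

abbreviation "ED n a b \<equiv> \<integral>\<^sup>+z. ennreal (real (bp_detected n a b (fst z) (snd z))) \<partial>(P0 a \<Otimes>\<^sub>M P1 b)"

lemma ED_del:
  assumes l: "l < Suc b"
  shows "(\<integral>\<^sup>+z. ennreal (real (bp_detected n a b (fst z) (del l b (snd z)))) \<partial>(P0 a \<Otimes>\<^sub>M P1 (Suc b))) = ED n a b"
proof -
  interpret p1: pair_prob_space "P0 a" "P1 (Suc b)" by (rule pps)
  interpret p2: pair_prob_space "P0 a" "P1 b" by (rule pps)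
  have m: "(\<lambda>z. ennreal (real (bp_detected n a b (fst z) (snd z)))) \<in> borel_measurable (P0 a \<Otimes>\<^sub>M P1 b)"
    by measurable
  have mp: "(\<lambda>z. (fst z, del l b (snd z))) \<in> measurable (P0 a \<Otimes>\<^sub>M P1 (Suc b)) (P0 a \<Otimes>\<^sub>M P1 b)"
    by (intro measurable_Pair measurable_fst measurable_compose[OF measurable_snd del_meas])
  have m2: "(\<lambda>z. ennreal (real (bp_detected n a b (fst z) (del l b (snd z))))) \<in> borel_measurable (P0 a \<Otimes>\<^sub>M P1 (Suc b))"
    using measurable_compose[OF mp m] by simp
  have "(\<integral>\<^sup>+z. ennreal (real (bp_detected n a b (fst z) (del l b (snd z)))) \<partial>(P0 a \<Otimes>\<^sub>M P1 (Suc b)))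
      = (\<integral>\<^sup>+s0. \<integral>\<^sup>+s1. ennreal (real (bp_detected n a b s0 (del l b s1))) \<partial>P1 (Suc b) \<partial>P0 a)"
    using p1.M2.nn_integral_fst[OF m2] by simp
  also have "\<dots> = (\<integral>\<^sup>+s0. \<integral>\<^sup>+t. ennreal (real (bp_detected n a b s0 t)) \<partial>P1 b \<partial>P0 a)"
  proof (intro nn_integral_cong)
    fix s0 assume s0: "s0 \<in> space (P0 a)"
    have mt: "(\<lambda>t. ennreal (real (bp_detected n a b s0 t))) \<in> borel_measurable (P1 b)"
      using measurable_Pair2[OF m s0] by simp
    have "(\<integral>\<^sup>+t. ennreal (real (bp_detected n a b s0 t)) \<partial>P1 b)
        = (\<integral>\<^sup>+t. ennreal (real (bp_detected n a b s0 t)) \<partial>distr (P1 (Suc b)) (P1 b) (del l b))"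
      by (simp add: distr_del[OF l])
    also have "\<dots> = (\<integral>\<^sup>+s1. ennreal (real (bp_detected n a b s0 (del l b s1))) \<partial>P1 (Suc b))"
      using mt by (subst nn_integral_distr[OF del_meas]) auto
    finally show "(\<integral>\<^sup>+s1. ennreal (real (bp_detected n a b s0 (del l b s1))) \<partial>P1 (Suc b))
       = (\<integral>\<^sup>+t. ennreal (real (bp_detected n a b s0 t)) \<partial>P1 b)" ..
  qed
  also have "\<dots> = ED n a b"
    using p2.M2.nn_integral_fst[OF m] by simp
  finally show ?thesis .
qed

lemma ED_mono: "of_nat b * ED n a (Suc b) \<le> of_nat (Suc b) * ED n a b"
proof -
  interpret p1: pair_prob_space "P0 a" "P1 (Suc b)" by (rule pps)
  have m: "(\<lambda>z. ennreal (real (bp_detected n a b (fst z) (del l b (snd z))))) \<in> borel_measurable (P0 a \<Otimes>\<^sub>M P1 (Suc b))" for l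
  proof -
    have mp: "(\<lambda>z. (fst z, del l b (snd z))) \<in> measurable (P0 a \<Otimes>\<^sub>M P1 (Suc b)) (P0 a \<Otimes>\<^sub>M P1 b)"
      by (intro measurable_Pair measurable_fst measurable_compose[OF measurable_snd del_meas])
    have "(\<lambda>z. ennreal (real (bp_detected n a b (fst z) (snd z)))) \<in> borel_measurable (P0 a \<Otimes>\<^sub>M P1 b)"
      by measurable
    from measurable_compose[OF mp this] show ?thesis by simp
  qed
  have "of_nat b * ED n a (Suc b) = (\<integral>\<^sup>+z. ennreal (real b * real (bp_detected n a (Suc b) (fst z) (snd z))) \<partial>(P0 a \<Otimes>\<^sub>M P1 (Suc b)))"
    by (subst nn_integral_cmult[symmetric]) (auto simp: ennreal_mult ennreal_of_nat_eq_real_of_nat)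
  also have "\<dots> \<le> (\<integral>\<^sup>+z. (\<Sum>l<Suc b. ennreal (real (bp_detected n a b (fst z) (del l b (snd z))))) \<partial>(P0 a \<Otimes>\<^sub>M P1 (Suc b)))"
  proof (intro nn_integral_mono)
    fix z
    have "ennreal (real b * real (bp_detected n a (Suc b) (fst z) (snd z)))
        \<le> ennreal (\<Sum>l<Suc b. real (bp_detected n a b (fst z) (del l b (snd z))))"
      by (intro ennreal_leI det_sum)
    also have "\<dots> = (\<Sum>l<Suc b. ennreal (real (bp_detected n a b (fst z) (del l b (snd z)))))"
      by (rule sum_ennreal[symmetric]) auto
    finally show "ennreal (real b * real (bp_detected n a (Suc b) (fst z) (snd z)))
        \<le> (\<Sum>l<Suc b. ennreal (real (bp_detected n a b (fst z) (del l b (snd z)))))" .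
  qed
  also have "\<dots> = (\<Sum>l<Suc b. (\<integral>\<^sup>+z. ennreal (real (bp_detected n a b (fst z) (del l b (snd z)))) \<partial>(P0 a \<Otimes>\<^sub>M P1 (Suc b))))"
    using m by (intro nn_integral_sum) auto
  also have "\<dots> = (\<Sum>l<Suc b. ED n a b)"
    by (intro sum.cong refl ED_del) auto
  also have "\<dots> = of_nat (Suc b) * ED n a b" by simp
  finally show ?thesis .
qed

end



lemma poisson_shift:
  fixes g :: "nat \<Rightarrow> real"
  assumes mu: "0 < \<mu>" and g: "\<And>k. 0 \<le> g k"
  shows "(\<integral>\<^sup>+k. ennreal (real k * g k) \<partial>poisson_pmf \<mu>) = ennreal \<mu> * (\<integral>\<^sup>+k. ennreal (g (Suc k)) \<partial>poisson_pmf \<mu>)"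
proof -
  define f where "f k = ennreal (pmf (poisson_pmf \<mu>) k) * ennreal (real k * g k)" for k
  have f0: "f 0 = 0" by (simp add: f_def)
  have fS: "f (Suc k) = ennreal \<mu> * (ennreal (pmf (poisson_pmf \<mu>) k) * ennreal (g (Suc k)))" for k
  proof -
    define r where "r = real (Suc k)"
    have r: "0 < r" by (simp add: r_def)
    have fk: "0 < (fact k :: real)" by simp
    have fs: "(fact (Suc k) :: real) = r * fact k" by (simp add: r_def)
    have "pmf (poisson_pmf \<mu>) (Suc k) * (real (Suc k) * g (Suc k)) = \<mu> ^ Suc k / (r * fact k) * exp (-\<mu>) * (r * g (Suc k))"
      using mu r by (simp add: fs r_def[symmetric])
    also have "\<dots> = \<mu> * (\<mu> ^ k / fact k * exp (-\<mu>) * g (Suc k))"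
      using r fk by (simp add: field_simps power_Suc)
    finally have "pmf (poisson_pmf \<mu>) (Suc k) * (real (Suc k) * g (Suc k)) = \<mu> * (pmf (poisson_pmf \<mu>) k * g (Suc k))"
      using mu r by simp
    then show ?thesis unfolding f_def using mu g[of "Suc k"]
      by (simp add: ennreal_mult'[symmetric] ennreal_mult''[symmetric] mult.assoc)
  qed
  have "(\<lambda>k. f (Suc k)) sums (\<Sum>k. f (Suc k))" by (rule summable_sums) simp
  then have "f sums ((\<Sum>k. f (Suc k)) + f 0)" by (rule sums_Suc)
  then have suf: "(\<Sum>k. f k) = (\<Sum>k. f (Suc k))" using f0 by (simp add: sums_iff)
  have "(\<integral>\<^sup>+k. ennreal (real k * g k) \<partial>poisson_pmf \<mu>) = (\<Sum>k. f k)"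
    by (simp add: nn_integral_measure_pmf nn_integral_count_space_nat f_def)
  also have "\<dots> = (\<Sum>k. ennreal \<mu> * (ennreal (pmf (poisson_pmf \<mu>) k) * ennreal (g (Suc k))))"
    by (simp add: suf fS)
  also have "\<dots> = ennreal \<mu> * (\<Sum>k. ennreal (pmf (poisson_pmf \<mu>) k) * ennreal (g (Suc k)))"
    by simp
  also have "(\<Sum>k. ennreal (pmf (poisson_pmf \<mu>) k) * ennreal (g (Suc k))) = (\<integral>\<^sup>+k. ennreal (g (Suc k)) \<partial>poisson_pmf \<mu>)"
    by (simp add: nn_integral_measure_pmf nn_integral_count_space_nat)
  finally show ?thesis .
qed

context two begin

definition hfun :: "nat \<Rightarrow> nat \<Rightarrow> nat \<Rightarrow> real" where
  "hfun n a b = (if b = 0 then 1 else enn2real (ED n a b) / real b)"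

lemma ED_fin: "ED n a b < \<top>"
  by (rule le_less_trans[OF ED_le[where n=n and a=a and b=b]]) (simp add: ennreal_of_nat_eq_real_of_nat)

lemma e_le: "enn2real (ED n a b) \<le> real b"
proof -
  have "enn2real (ED n a b) \<le> enn2real (of_nat b)"
    using ED_le[where n=n and a=a and b=b] by (intro enn2real_mono) (auto simp: ennreal_of_nat_eq_real_of_nat)
  then show ?thesis by simp
qed

lemma e_eq: "integral\<^sup>L (score_space f0 f1 a b) (\<lambda>(s0, s1). real (bp_detected n a b s0 s1)) = enn2real (ED n a b)"
  unfolding score_space_eq by (subst integral_eq_nn_integral) (auto simp: case_prod_beta)

lemma hfun_bounds: "0 \<le> hfun n a b" "hfun n a b \<le> 1"
  using e_le[where n=n and a=a and b=b] by (auto simp: hfun_def)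

lemma b_hfun: "real b * hfun n a b = enn2real (ED n a b)"
proof (cases "b = 0")
  case True
  have "enn2real (ED n a b) = 0" using e_le[where n=n and a=a and b=b] True enn2real_nonneg[of "ED n a b"] by linarith
  then show ?thesis using True by (simp add: hfun_def)
qed (simp add: hfun_def)

lemma hfun_mono: "hfun n a (Suc b) \<le> hfun n a b"
proof (cases "b = 0")
  case True
  then show ?thesis using e_le[where n=n and a=a and b="Suc 0"] by (simp add: hfun_def)
next
  case False
  have "enn2real (of_nat b * ED n a (Suc b)) \<le> enn2real (of_nat (Suc b) * ED n a b)"
    using ED_mono[where n=n and a=a and b=b] ED_fin[where n=n and a=a and b=b] by (intro enn2real_mono) (auto simp: ennreal_mult_less_top ennreal_of_nat_eq_real_of_nat)
  then have "real b * enn2real (ED n a (Suc b)) \<le> real (Suc b) * enn2real (ED n a b)"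
    by (simp add: enn2real_mult ennreal_of_nat_eq_real_of_nat del: of_nat_Suc)
  then show ?thesis using False by (simp add: hfun_def field_simps)
qed

lemma psi_inner: "integral\<^sup>L (score_space f0 f1 a b) (\<lambda>(s0, s1). bp_ratio n a b s0 s1) = hfun n a b"
proof -
  interpret pair_prob_space "P0 a" "P1 b" by (rule pps)
  show ?thesis
  proof (cases "b = 0")
    case True
    have one: "integral\<^sup>L (score_space f0 f1 a b) (\<lambda>_. 1::real) = 1"
      using P.prob_space unfolding score_space_eq by simp
    have "(\<lambda>(s0, s1). bp_ratio n a b s0 s1) = (\<lambda>_. 1)" using True by (auto simp: bp_ratio_def)
    then show ?thesis using True one by (simp add: hfun_def)
  next
    case False
    then have "(\<lambda>(s0, s1). bp_ratio n a b s0 s1) = (\<lambda>z. (\<lambda>(s0, s1). real (bp_detected n a b s0 s1)) z / real b)"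
      by (auto simp: bp_ratio_def)
    then show ?thesis using False by (simp add: hfun_def e_eq del: integral_divide_zero) (simp add: e_eq[symmetric])
  qed
qed

end

theorem theorem6:
  fixes lam f0 f1 F0 F1 :: "real \<Rightarrow> real" and \<tau> \<beta> k :: real
  assumes tau_pos: "0 < \<tau>"
    and lam_cont: "continuous_on {0..\<tau>} lam"
    and lam_nonneg: "\<And>t. t \<in> {0..\<tau>} \<Longrightarrow> 0 \<le> lam t"
    and Lam_pos: "0 < integral {0..\<tau>} lam"
    and beta: "0 < \<beta>" "\<beta> < 1/2"
    and f0_meas: "f0 \<in> borel_measurable borel" and f1_meas: "f1 \<in> borel_measurable borel"
    and f0_nonneg: "\<And>x. 0 \<le> f0 x" and f1_nonneg: "\<And>x. 0 \<le> f1 x"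
    and f0_supp: "\<And>x. x \<notin> {0..1} \<Longrightarrow> f0 x = 0"
    and f1_supp: "\<And>x. x \<notin> {0..1} \<Longrightarrow> f1 x = 0"
    and f0_int: "integrable lborel f0" and f1_int: "integrable lborel f1"
    and f0_one: "integral\<^sup>L lborel f0 = 1" and f1_one: "integral\<^sup>L lborel f1 = 1"
    and F0_def: "\<And>x. F0 x = set_lebesgue_integral lborel {..x} f0"
    and F1_def: "\<And>x. F1 x = set_lebesgue_integral lborel {..x} f1"
    and k: "0 \<le> k" "k \<le> 1"
  shows "(let Lam = integral {0..\<tau>} lam; nk = nat \<lfloor>k * Lam\<rfloor> in
          Psi_BP f0 f1 \<beta> Lam nk \<ge>
            1 / (\<beta> * Lam) *
            measure_pmf.expectation (pair_pmf (poisson_pmf ((1 - \<beta>) * Lam)) (poisson_pmf (\<beta> * Lam)))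
              (\<lambda>(a, b). \<Sum>j = 1..min nk b. F_W F0 f0 F1 f1 nk a b j 0))"
proof -
  interpret two f0 F0 f1 F1
    by unfold_locales (use assms in auto)
  define Lam where "Lam = integral {0..\<tau>} lam"
  define nk where "nk = nat \<lfloor>k * Lam\<rfloor>"
  define P where "P = poisson_pmf ((1 - \<beta>) * Lam)"
  define Q where "Q = poisson_pmf (\<beta> * Lam)"
  define S where "S = (\<lambda>(a, b). \<Sum>j = 1..min nk b. F_W F0 f0 F1 f1 nk a b j 0)"
  have mu: "0 < \<beta> * Lam" using beta Lam_pos by (simp add: Lam_def)
  have S_nn: "0 \<le> S z" for z
  proof -
    obtain a b where z: "z = (a, b)" by force
    have "F_W F0 f0 F1 f1 nk a b j 0 = enn2real (\<integral>\<^sup>+y. ennreal (G nk a b j y) \<partial>lborel)" if "j \<in> {1..min nk b}" for j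
      using that by (intro FW_eq) auto
    then show ?thesis unfolding S_def z by (auto intro!: sum_nonneg)
  qed
  have S_le: "S (a, b) \<le> real b * hfun nk a b" for a b
    unfolding S_def b_hfun e_eq[symmetric] using step1 by simp
  have Psi: "Psi_BP f0 f1 \<beta> Lam nk = measure_pmf.expectation (pair_pmf P Q) (\<lambda>(a, b). hfun nk a b)"
    unfolding Psi_BP_def P_def Q_def by (simp add: psi_inner case_prod_beta)
  have Eh: "measure_pmf.expectation (pair_pmf P Q) (\<lambda>(a, b). hfun nk a b)
      = enn2real (\<integral>\<^sup>+z. ennreal (case z of (a, b) \<Rightarrow> hfun nk a b) \<partial>pair_pmf P Q)"
    by (rule integral_eq_nn_integral) (auto simp: hfun_bounds split: prod.splits)
  have ES: "measure_pmf.expectation (pair_pmf P Q) S = enn2real (\<integral>\<^sup>+z. ennreal (S z) \<partial>pair_pmf P Q)"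
    by (rule integral_eq_nn_integral) (auto simp: S_nn)
  have hfin: "(\<integral>\<^sup>+z. ennreal (case z of (a, b) \<Rightarrow> hfun nk a b) \<partial>pair_pmf P Q) < \<top>"
  proof -
    have "(\<integral>\<^sup>+z. ennreal (case z of (a, b) \<Rightarrow> hfun nk a b) \<partial>pair_pmf P Q) \<le> (\<integral>\<^sup>+z. 1 \<partial>pair_pmf P Q)"
      by (intro nn_integral_mono) (auto simp: hfun_bounds split: prod.splits)
    then show ?thesis by (simp add: le_less_trans measure_pmf.emeasure_space_1)
  qed
  have key: "(\<integral>\<^sup>+z. ennreal (S z) \<partial>pair_pmf P Q) \<le> ennreal (\<beta> * Lam) * (\<integral>\<^sup>+z. ennreal (case z of (a, b) \<Rightarrow> hfun nk a b) \<partial>pair_pmf P Q)"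
  proof -
    have "(\<integral>\<^sup>+z. ennreal (S z) \<partial>pair_pmf P Q) \<le> (\<integral>\<^sup>+z. ennreal (case z of (a, b) \<Rightarrow> real b * hfun nk a b) \<partial>pair_pmf P Q)"
      by (intro nn_integral_mono ennreal_leI) (auto simp: S_le split: prod.splits)
    also have "\<dots> = (\<integral>\<^sup>+a. \<integral>\<^sup>+b. ennreal (real b * hfun nk a b) \<partial>Q \<partial>P)"
      by (simp add: nn_integral_pair_pmf')
    also have "\<dots> = (\<integral>\<^sup>+a. ennreal (\<beta> * Lam) * \<integral>\<^sup>+b. ennreal (hfun nk a (Suc b)) \<partial>Q \<partial>P)"
      unfolding Q_def using mu by (intro nn_integral_cong poisson_shift) (auto simp: hfun_bounds)
    also have "\<dots> \<le> (\<integral>\<^sup>+a. ennreal (\<beta> * Lam) * \<integral>\<^sup>+b. ennreal (hfun nk a b) \<partial>Q \<partial>P)"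
      by (intro nn_integral_mono mult_left_mono ennreal_leI hfun_mono) auto
    also have "\<dots> = ennreal (\<beta> * Lam) * (\<integral>\<^sup>+a. \<integral>\<^sup>+b. ennreal (hfun nk a b) \<partial>Q \<partial>P)"
      by (rule nn_integral_cmult) simp
    also have "(\<integral>\<^sup>+a. \<integral>\<^sup>+b. ennreal (hfun nk a b) \<partial>Q \<partial>P) = (\<integral>\<^sup>+z. ennreal (case z of (a, b) \<Rightarrow> hfun nk a b) \<partial>pair_pmf P Q)"
      by (simp add: nn_integral_pair_pmf')
    finally show ?thesis .
  qed
  have "measure_pmf.expectation (pair_pmf P Q) S \<le> enn2real (ennreal (\<beta> * Lam) * (\<integral>\<^sup>+z. ennreal (case z of (a, b) \<Rightarrow> hfun nk a b) \<partial>pair_pmf P Q))"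
    unfolding ES using key hfin by (intro enn2real_mono) (auto simp: ennreal_mult_less_top)
  also have "\<dots> = (\<beta> * Lam) * measure_pmf.expectation (pair_pmf P Q) (\<lambda>(a, b). hfun nk a b)"
    unfolding Eh using mu by (simp add: enn2real_mult)
  finally have "measure_pmf.expectation (pair_pmf P Q) S \<le> (\<beta> * Lam) * Psi_BP f0 f1 \<beta> Lam nk"
    using Psi by simp
  then have "1 / (\<beta> * Lam) * measure_pmf.expectation (pair_pmf P Q) S \<le> Psi_BP f0 f1 \<beta> Lam nk"
    using mu by (simp add: field_simps)
  then show ?thesis unfolding Let_def Lam_def[symmetric] nk_def[symmetric] P_def[symmetric] Q_def[symmetric] S_def[symmetric]
    by simp
qed


end
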